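(* Let $\Bbbk$ be a field of characteristic zero, let $n=2m$ be an even integer and $S=\Bbbk[x_1,\ldots,x_n]$. (1) For $d \geq 5$ and $n\geq 4$, let $I = (x_1^d,\dots, x_n^d, x_1^3x_2^{d-3})$. (2) For $d = 4$ and $n\geq 4$, let $I = (x_1^d,\ldots, x_n^d,x_1 x_2 x_3 x_4)$. (3) For $d = 3$ and $n\geq 6$, let $I = (x_1^d,\ldots, x_n^d,x_1 x_2 x_3)$. Then in all cases, $S/I$ fails the WLP in degree $m(d-1) -1$.
   Context: For a monomial ideal $I$, $A=S/I$ fails the WLP in degree $i$ if the multiplication map $\times(x_1+\cdots+x_n): A_i\to A_{i+1}$ is neither injective nor surjective. *)

theory Defs
  imports "HOL-Library.Poly_Mapping"
begin

text \<open>The paper's variable x_(j+1) is rendered as Var j.\<close>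

type_synonym 'k mpoly = "(nat \<Rightarrow>\<^sub>0 nat) \<Rightarrow>\<^sub>0 'k"

definition Var :: "nat \<Rightarrow> ('k::comm_ring_1) mpoly" where
  "Var j = Poly_Mapping.single (Poly_Mapping.single j 1) 1"

definition in_S :: "nat \<Rightarrow> ('k::comm_ring_1) mpoly \<Rightarrow> bool" where
  "in_S n p \<longleftrightarrow> (\<forall>a::nat \<Rightarrow>\<^sub>0 nat. a \<in> Poly_Mapping.keys p \<longrightarrow> Poly_Mapping.keys a \<subseteq> {..<n})"

definition mdeg :: "(nat \<Rightarrow>\<^sub>0 nat) \<Rightarrow> nat" where
  "mdeg a = (\<Sum>j\<in>Poly_Mapping.keys a. Poly_Mapping.lookup a j)"

text \<open>Homogeneous of degree i (the zero polynomial is homogeneous of every degree).\<close>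
definition homog :: "nat \<Rightarrow> ('k::comm_ring_1) mpoly \<Rightarrow> bool" where
  "homog i p \<longleftrightarrow> (\<forall>a::nat \<Rightarrow>\<^sub>0 nat. a \<in> Poly_Mapping.keys p \<longrightarrow> mdeg a = i)"

definition ideal_gen :: "nat \<Rightarrow> ('k::comm_ring_1) mpoly set \<Rightarrow> 'k mpoly set" where
  "ideal_gen n G = {p. \<exists>q. (\<forall>g\<in>G. in_S n (q g)) \<and> p = (\<Sum>g\<in>G. q g * g)}"

definition lin_form :: "nat \<Rightarrow> ('k::comm_ring_1) mpoly" where
  "lin_form n = (\<Sum>j<n. Var j)"

text \<open>Injectivity / surjectivity of x(x_1+...+x_n) : A_i \<rightarrow> A_(i+1), A = S/(G), for
  a homogeneous (here monomial) ideal (G): the class of a form f of degree i is zero in A_i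
  iff f \<in> (G).\<close>
definition mult_injective :: "nat \<Rightarrow> ('k::comm_ring_1) mpoly set \<Rightarrow> nat \<Rightarrow> bool" where
  "mult_injective n G i \<longleftrightarrow>
     (\<forall>f. in_S n f \<and> homog i f \<and> lin_form n * f \<in> ideal_gen n G \<longrightarrow> f \<in> ideal_gen n G)"

definition mult_surjective :: "nat \<Rightarrow> ('k::comm_ring_1) mpoly set \<Rightarrow> nat \<Rightarrow> bool" where
  "mult_surjective n G i \<longleftrightarrow>
     (\<forall>g. in_S n g \<and> homog (Suc i) g \<longrightarrow>
        (\<exists>f. in_S n f \<and> homog i f \<and> g - lin_form n * f \<in> ideal_gen n G))"

definition fails_WLP_in_degree :: "nat \<Rightarrow> ('k::comm_ring_1) mpoly set \<Rightarrow> nat \<Rightarrow> bool" where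
  "fails_WLP_in_degree n G i \<longleftrightarrow> \<not> mult_injective n G i \<and> \<not> mult_surjective n G i"

definition pure_powers :: "nat \<Rightarrow> nat \<Rightarrow> ('k::comm_ring_1) mpoly set" where
  "pure_powers n d = (\<lambda>j. Var j ^ d) ` {..<n}"

end

theory Submission
  imports Defs
begin

abbreviation lk where "lk \<equiv> Poly_Mapping.lookup"
abbreviation ks where "ks \<equiv> Poly_Mapping.keys"

lemma lookup_add_nat: "lk ((a::nat \<Rightarrow>\<^sub>0 nat) + b) j = lk a j + lk b j"
  by (simp add: lookup_add)

lemma keys_add_nat: "ks ((a::nat \<Rightarrow>\<^sub>0 nat) + b) = ks a \<union> ks b"
  by (auto simp: in_keys_iff lookup_add)

lemma Var_pow: "(Var j :: 'k::comm_ring_1 mpoly) ^ k = Poly_Mapping.single (Poly_Mapping.single j k) 1"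
proof (induction k)
  case 0
  then show ?case by simp
next
  case (Suc k)
  have "(Var j :: 'k mpoly) ^ Suc k = Var j * Var j ^ k" by simp
  also have "\<dots> = Poly_Mapping.single (Poly_Mapping.single j 1 + Poly_Mapping.single j k) 1"
    by (simp add: Suc) (simp add: Var_def mult_single)
  also have "Poly_Mapping.single j 1 + Poly_Mapping.single j k = Poly_Mapping.single j (Suc k)"
    by (simp add: single_add[symmetric])
  finally show ?case .
qed

lemma poly_expansion: "p = (\<Sum>x\<in>ks p. Poly_Mapping.single x (lk p x))"
proof (rule poly_mapping_eqI)
  fix k
  have "lk (\<Sum>x\<in>ks p. Poly_Mapping.single x (lk p x)) k
      = (\<Sum>x\<in>ks p. (if x = k then lk p x else 0))"
    by (simp add: lookup_sum lookup_single when_def)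
  also have "\<dots> = lk p k"
    by (simp add: sum.delta in_keys_iff)
  finally show "lk p k = lk (\<Sum>x\<in>ks p. Poly_Mapping.single x (lk p x)) k" by simp
qed

lemma lookup_mult_single_sum:
  fixes p :: "(nat \<Rightarrow>\<^sub>0 nat) \<Rightarrow>\<^sub>0 'k::comm_ring_1"
  shows "lk (p * Poly_Mapping.single e c) k = (\<Sum>x\<in>ks p. if x + e = k then lk p x * c else 0)"
proof -
  have "p * Poly_Mapping.single e c = (\<Sum>x\<in>ks p. Poly_Mapping.single (x + e) (lk p x * c))"
    by (subst poly_expansion[of p]) (simp add: sum_distrib_right mult_single)
  then show ?thesis
    by (simp add: lookup_sum lookup_single when_def)
qed

lemma lookup_mult_single:
  fixes p :: "(nat \<Rightarrow>\<^sub>0 nat) \<Rightarrow>\<^sub>0 'k::comm_ring_1"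
  shows "lk (p * Poly_Mapping.single e c) (x + e) = lk p x * c"
proof -
  have "lk (p * Poly_Mapping.single e c) (x + e) = (\<Sum>y\<in>ks p. if y = x then lk p y * c else 0)"
    unfolding lookup_mult_single_sum by (intro sum.cong) auto
  also have "\<dots> = lk p x * c"
    by (simp add: sum.delta in_keys_iff)
  finally show ?thesis .
qed

lemma lookup_mult_single_zero:
  fixes p :: "(nat \<Rightarrow>\<^sub>0 nat) \<Rightarrow>\<^sub>0 'k::comm_ring_1"
  assumes "\<And>x. x + e \<noteq> k"
  shows "lk (p * Poly_Mapping.single e c) k = 0"
  unfolding lookup_mult_single_sum using assms by simp

lemma keys_mult_single:
  fixes p :: "(nat \<Rightarrow>\<^sub>0 nat) \<Rightarrow>\<^sub>0 'k::comm_ring_1"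
  shows "ks (p * Poly_Mapping.single e c) \<subseteq> (\<lambda>x. x + e) ` ks p"
  using keys_mult[of p "Poly_Mapping.single e c"] by (auto split: if_splits)

lemma lk_outside: "ks (a::nat \<Rightarrow>\<^sub>0 nat) \<subseteq> {..<n} \<Longrightarrow> n \<le> j \<Longrightarrow> lk a j = 0"
proof -
  assume "ks a \<subseteq> {..<n}" "n \<le> j"
  moreover have "j \<notin> {..<n}" using \<open>n \<le> j\<close> by simp
  ultimately have "j \<notin> ks a" by blast
  then show ?thesis by (simp add: in_keys_iff)
qed

lemma mdeg_superset:
  assumes "finite K" "ks a \<subseteq> K"
  shows "mdeg a = (\<Sum>j\<in>K. lk a j)"
  unfolding mdeg_def
  by (rule sum.mono_neutral_left) (use assms in \<open>auto simp: in_keys_iff\<close>)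

lemma mdeg_add: "mdeg (a + b) = mdeg a + mdeg b"
proof -
  have "mdeg (a + b) = (\<Sum>j\<in>ks a \<union> ks b. lk (a + b) j)"
    by (rule mdeg_superset) (auto simp: keys_add_nat)
  also have "\<dots> = (\<Sum>j\<in>ks a \<union> ks b. lk a j) + (\<Sum>j\<in>ks a \<union> ks b. lk b j)"
    by (simp add: lookup_add sum.distrib)
  also have "\<dots> = mdeg a + mdeg b"
    by (simp add: mdeg_superset[symmetric])
  finally show ?thesis .
qed

lemma mdeg_single: "mdeg (Poly_Mapping.single j k) = k"
  by (simp add: mdeg_def)

lemma mdeg_zero: "mdeg 0 = 0"
  by (simp add: mdeg_def)

lemma in_S_iff: "in_S n p \<longleftrightarrow> (\<forall>a. lk p a \<noteq> 0 \<longrightarrow> ks a \<subseteq> {..<n})"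
  by (simp add: in_S_def in_keys_iff)

lemma in_S_0 [simp]: "in_S n 0"
  by (simp add: in_S_def)

lemma in_S_add: "in_S n p \<Longrightarrow> in_S n q \<Longrightarrow> in_S n (p + q)"
  unfolding in_S_iff lookup_add by (metis add.left_neutral add.right_neutral)

lemma in_S_uminus: "in_S n p \<Longrightarrow> in_S n (- p)"
  by (auto simp: in_S_iff)

lemma in_S_diff: "in_S n p \<Longrightarrow> in_S n q \<Longrightarrow> in_S n (p - q)"
  unfolding in_S_iff lookup_minus by (metis diff_self)

lemma in_S_mult: "in_S n p \<Longrightarrow> in_S n q \<Longrightarrow> in_S n (p * q)"
  unfolding in_S_def using keys_mult[of p q] by (force simp: keys_add_nat)

lemma in_S_single: "ks a \<subseteq> {..<n} \<Longrightarrow> in_S n (Poly_Mapping.single a c)"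
  by (simp add: in_S_def)

lemma in_S_1 [simp]: "in_S n 1"
  by (metis in_S_single keys_zero empty_subsetI single_one)

lemma in_S_Var: "j < n \<Longrightarrow> in_S n (Var j)"
  unfolding Var_def by (rule in_S_single) auto

lemma in_S_pow: "in_S n p \<Longrightarrow> in_S n (p ^ k)"
  by (induction k) (auto intro: in_S_mult)

lemma in_S_sum: "(\<And>i. i \<in> A \<Longrightarrow> in_S n (f i)) \<Longrightarrow> in_S n (sum f A)"
  by (induction A rule: infinite_finite_induct) (auto intro: in_S_add)

lemma in_S_of_int [simp]: "in_S n (of_int c)"
  by (metis in_S_single keys_zero empty_subsetI single_of_int)

lemma in_S_of_nat [simp]: "in_S n (of_nat c)"
  by (metis in_S_single keys_zero empty_subsetI single_of_nat)

lemma in_S_mono: "in_S n p \<Longrightarrow> n \<le> n' \<Longrightarrow> in_S n' p"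
  unfolding in_S_def by (meson lessThan_subset_iff order_trans)

lemma homog_0 [simp]: "homog i 0"
  by (simp add: homog_def)

lemma homog_add: "homog i p \<Longrightarrow> homog i q \<Longrightarrow> homog i (p + q)"
  unfolding homog_def using keys_add[of p q] by blast

lemma homog_uminus: "homog i p \<Longrightarrow> homog i (- p)"
  by (simp add: homog_def)

lemma homog_diff: "homog i p \<Longrightarrow> homog i q \<Longrightarrow> homog i (p - q)"
  unfolding homog_def in_keys_iff lookup_minus by (metis diff_self)

lemma homog_mult: "homog i p \<Longrightarrow> homog j q \<Longrightarrow> homog (i + j) (p * q)"
  unfolding homog_def using keys_mult[of p q] by (force simp: mdeg_add)

lemma homog_mult': "homog i p \<Longrightarrow> homog j q \<Longrightarrow> k = i + j \<Longrightarrow> homog k (p * q)"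
  using homog_mult by blast

lemma homog_single: "mdeg a = i \<Longrightarrow> homog i (Poly_Mapping.single a c)"
  by (simp add: homog_def)

lemma homog_1: "homog 0 1"
  by (metis homog_single mdeg_zero single_one)

lemma homog_of_int: "homog 0 (of_int c)"
  by (metis homog_single mdeg_zero single_of_int)

lemma homog_of_nat: "homog 0 (of_nat c)"
  by (metis homog_single mdeg_zero single_of_nat)

lemma homog_Var: "homog 1 (Var j)"
  unfolding Var_def by (rule homog_single) (simp add: mdeg_single)

lemma homog_pow: "homog i p \<Longrightarrow> homog (k * i) (p ^ k)"
  by (induction k) (auto simp: homog_1 intro: homog_mult')

lemma homog_pow1: "homog 1 p \<Longrightarrow> homog k (p ^ k)"
  using homog_pow[of 1 p k] by simp

lemma homog_sum: "(\<And>x. x \<in> A \<Longrightarrow> homog i (f x)) \<Longrightarrow> homog i (sum f A)"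
  by (induction A rule: infinite_finite_induct) (auto intro: homog_add)


lemma ideal_genI:
  "(\<And>g. g \<in> G \<Longrightarrow> in_S n (q g)) \<Longrightarrow> p = (\<Sum>g\<in>G. q g * g) \<Longrightarrow> p \<in> ideal_gen n G"
  unfolding ideal_gen_def by blast

lemma ideal_0: "(0::('k::comm_ring_1) mpoly) \<in> ideal_gen n G"
proof -
  have "(0::'k mpoly) = (\<Sum>g\<in>G. 0 * g)" by simp
  then show ?thesis by (intro ideal_genI[of G n "\<lambda>_. 0"]) auto
qed

lemma ideal_add:
  fixes p p' :: "('k::comm_ring_1) mpoly"
  assumes "p \<in> ideal_gen n G" "p' \<in> ideal_gen n G"
  shows "p + p' \<in> ideal_gen n G"
proof -
  obtain q where q: "\<forall>g\<in>G. in_S n (q g)" "p = (\<Sum>g\<in>G. q g * g)"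
    using assms(1) unfolding ideal_gen_def by blast
  obtain q' where q': "\<forall>g\<in>G. in_S n (q' g)" "p' = (\<Sum>g\<in>G. q' g * g)"
    using assms(2) unfolding ideal_gen_def by blast
  have "\<forall>g\<in>G. in_S n (q g + q' g)" using q q' by (auto intro: in_S_add)
  moreover have "p + p' = (\<Sum>g\<in>G. (q g + q' g) * g)"
    by (simp add: q q' sum.distrib distrib_right)
  ultimately show ?thesis by (intro ideal_genI[of G n "\<lambda>g. q g + q' g"]) auto
qed

lemma ideal_mult:
  fixes p r :: "('k::comm_ring_1) mpoly"
  assumes "p \<in> ideal_gen n G" "in_S n r"
  shows "r * p \<in> ideal_gen n G"
proof -
  obtain q where q: "\<forall>g\<in>G. in_S n (q g)" "p = (\<Sum>g\<in>G. q g * g)"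
    using assms(1) unfolding ideal_gen_def by blast
  have "\<forall>g\<in>G. in_S n (r * q g)" using q assms(2) by (auto intro: in_S_mult)
  moreover have "r * p = (\<Sum>g\<in>G. (r * q g) * g)"
    by (simp add: q sum_distrib_left mult.assoc)
  ultimately show ?thesis by (intro ideal_genI[of G n "\<lambda>g. r * q g"]) auto
qed

lemma ideal_uminus:
  fixes p :: "('k::comm_ring_1) mpoly"
  shows "p \<in> ideal_gen n G \<Longrightarrow> - p \<in> ideal_gen n G"
  using ideal_mult[of p n G "-1"] by (simp add: in_S_uminus)

lemma ideal_diff:
  fixes p p' :: "('k::comm_ring_1) mpoly"
  shows "p \<in> ideal_gen n G \<Longrightarrow> p' \<in> ideal_gen n G \<Longrightarrow> p - p' \<in> ideal_gen n G"
  using ideal_add[of p n G "- p'"] ideal_uminus by fastforce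

lemma ideal_gen_mem:
  fixes g r :: "('k::comm_ring_1) mpoly"
  assumes "finite G" "g \<in> G" "in_S n r"
  shows "r * g \<in> ideal_gen n G"
proof -
  define q where "q h = (if h = g then r else 0)" for h
  have "\<forall>h\<in>G. in_S n (q h)" using assms by (auto simp: q_def)
  moreover have "r * g = (\<Sum>h\<in>G. q h * h)"
  proof -
    have "(\<Sum>h\<in>G. q h * h) = (\<Sum>h\<in>G. if h = g then r * h else 0)"
      by (rule sum.cong) (auto simp: q_def)
    also have "\<dots> = r * g" using assms by (simp add: sum.delta)
    finally show ?thesis by simp
  qed
  ultimately show ?thesis by (intro ideal_genI[of G n q]) auto
qed

lemma ideal_sum:
  fixes f :: "_ \<Rightarrow> ('k::comm_ring_1) mpoly"
  shows "(\<And>i. i \<in> A \<Longrightarrow> f i \<in> ideal_gen n G) \<Longrightarrow> sum f A \<in> ideal_gen n G"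
  by (induction A rule: infinite_finite_induct) (auto intro: ideal_add ideal_0)

lemma ideal_mono:
  fixes G :: "('k::comm_ring_1) mpoly set"
  assumes "finite G'" "G \<subseteq> G'" "n \<le> n'"
  shows "ideal_gen n G \<subseteq> ideal_gen n' G'"
proof
  fix p assume "p \<in> ideal_gen n G"
  then obtain q where q: "\<forall>g\<in>G. in_S n (q g)" "p = (\<Sum>g\<in>G. q g * g)"
    unfolding ideal_gen_def by blast
  define q' where "q' g = (if g \<in> G then q g else 0)" for g
  have "\<forall>g\<in>G'. in_S n' (q' g)"
    using q(1) assms(3) by (auto simp: q'_def intro: in_S_mono)
  moreover have "p = (\<Sum>g\<in>G'. q' g * g)"
  proof -
    have "(\<Sum>g\<in>G'. q' g * g) = (\<Sum>g\<in>G. q' g * g)"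
      by (rule sum.mono_neutral_right) (use assms in \<open>auto simp: q'_def\<close>)
    also have "\<dots> = p" by (simp add: q'_def q(2))
    finally show ?thesis by simp
  qed
  ultimately show "p \<in> ideal_gen n' G'" by (intro ideal_genI[of G' n' q']) auto
qed

lemma ideal_keys:
  fixes p :: "('k::comm_ring_1) mpoly"
  assumes "p \<in> ideal_gen n G" "a \<in> ks p"
  shows "\<exists>g\<in>G. \<exists>q. a \<in> ks (q * g)"
proof -
  obtain q where q: "p = (\<Sum>g\<in>G. q g * g)"
    using assms(1) unfolding ideal_gen_def by blast
  then show ?thesis using assms(2) keys_sum[of "\<lambda>g. q g * g" G] by blast
qed

definition Gset :: "nat \<Rightarrow> nat \<Rightarrow> (nat \<Rightarrow>\<^sub>0 nat) \<Rightarrow> ('k::comm_ring_1) mpoly set" where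
  "Gset n d e = insert (Poly_Mapping.single e 1) (pure_powers n d)"

lemma finite_Gset: "finite (Gset n d e)"
  by (simp add: Gset_def pure_powers_def)

lemma Gset_pow: "j < n \<Longrightarrow> Var j ^ d \<in> Gset n d e"
  by (simp add: Gset_def pure_powers_def)

lemma Gset_mu: "Poly_Mapping.single e 1 \<in> Gset n d e"
  by (simp add: Gset_def)

lemma Gset_mono: "n \<le> n' \<Longrightarrow> Gset n d e \<subseteq> Gset n' d e"
  by (auto simp: Gset_def pure_powers_def)

definition std :: "nat \<Rightarrow> nat \<Rightarrow> (nat \<Rightarrow>\<^sub>0 nat) \<Rightarrow> (nat \<Rightarrow>\<^sub>0 nat) \<Rightarrow> bool" where
  "std n d e a \<longleftrightarrow> (\<forall>j<n. lk a j < d) \<and> \<not> (\<forall>j. lk e j \<le> lk a j)"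

lemma not_in_ideal:
  fixes f :: "('k::comm_ring_1) mpoly"
  assumes "lk f a \<noteq> 0" "std n d e a"
  shows "f \<notin> ideal_gen n (Gset n d e)"
proof
  assume "f \<in> ideal_gen n (Gset n d e)"
  moreover have "a \<in> ks f" using assms(1) by (simp add: in_keys_iff)
  ultimately obtain g and q :: "'k mpoly" where g: "g \<in> Gset n d e" "a \<in> ks (q * g)"
    using ideal_keys[of f n "Gset n d e" a] by blast
  from g(1) obtain e' where e': "g = Poly_Mapping.single e' 1" "e' = e \<or> (\<exists>j<n. e' = Poly_Mapping.single j d)"
    unfolding Gset_def pure_powers_def by (auto simp: Var_pow)
  from g(2) e'(1) obtain x where x: "a = x + e'"
    using keys_mult_single[of q e' 1] by auto
  have le: "lk e' j \<le> lk a j" for j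
    by (simp add: x lookup_add)
  from e'(2) show False
  proof
    assume "e' = e" then show False using le assms(2) by (simp add: std_def)
  next
    assume "\<exists>j<n. e' = Poly_Mapping.single j d"
    then obtain j where "j < n" "e' = Poly_Mapping.single j d" by blast
    then show False using le[of j] assms(2) by (simp add: std_def) (meson not_le)
  qed
qed


section \<open>Non-injectivity: extension by a pair of variables\<close>

lemma lin_form_Suc: "lin_form (Suc n) = lin_form n + Var n"
  by (simp add: lin_form_def)

lemma neg_Var_pow: "(- Var j :: ('k::comm_ring_1) mpoly) ^ k = Poly_Mapping.single (Poly_Mapping.single j k) ((-1) ^ k)"
proof (induction k)
  case 0
  then show ?case by simp
next
  case (Suc k)
  have m: "(- Var j :: 'k mpoly) = Poly_Mapping.single (Poly_Mapping.single j 1) (-1)"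
    by (simp add: Var_def single_uminus)
  have "(- Var j :: 'k mpoly) ^ Suc k = (- Var j) * (- Var j) ^ k" by (simp only: power_Suc)
  also have "\<dots> = Poly_Mapping.single (Poly_Mapping.single j 1) (-1) * Poly_Mapping.single (Poly_Mapping.single j k) ((-1) ^ k)"
    by (subst Suc, subst m, rule refl)
  also have "\<dots> = Poly_Mapping.single (Poly_Mapping.single j 1 + Poly_Mapping.single j k) (-1 * (-1) ^ k)"
    by (simp only: mult_single)
  also have "Poly_Mapping.single j 1 + Poly_Mapping.single j k = Poly_Mapping.single j (Suc k)"
    by (simp add: single_add[symmetric])
  finally show ?case by simp
qed

definition Hp :: "nat \<Rightarrow> nat \<Rightarrow> ('k::comm_ring_1) mpoly" where
  "Hp d n = (\<Sum>i<d. (- Var n) ^ (d - Suc i) * Var (Suc n) ^ i)"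

lemma Hp_identity: "(Var n + Var (Suc n)) * (Hp d n :: ('k::comm_ring_1) mpoly) = Var (Suc n) ^ d - (- Var n) ^ d"
  using power_diff_sumr2[of "Var (Suc n) :: 'k mpoly" d "- Var n"]
  by (simp add: Hp_def add.commute)

lemma in_S_Hp: "in_S (Suc (Suc n)) (Hp d n)"
proof -
  have a: "in_S (Suc (Suc n)) (Var n)" "in_S (Suc (Suc n)) (Var (Suc n))"
    by (simp_all add: in_S_Var)
  show ?thesis
    unfolding Hp_def by (rule in_S_sum, rule in_S_mult, rule in_S_pow, rule in_S_uminus, rule a, rule in_S_pow, rule a)
qed

lemma homog_Hp: "homog (d - 1) (Hp d n)"
  unfolding Hp_def
proof (rule homog_sum)
  fix i assume "i \<in> {..<d}"
  then show "homog (d - 1) ((- Var n) ^ (d - Suc i) * Var (Suc n) ^ i)"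
    by (intro homog_mult'[of "(d - Suc i) * 1" _ "i * 1"] homog_pow homog_uminus homog_Var) auto
qed

lemma lookup_Hp:
  fixes f :: "('k::comm_ring_1) mpoly"
  assumes "in_S n f" "ks a \<subseteq> {..<n}" "d \<ge> 1"
  shows "lk (f * Hp d n) (a + Poly_Mapping.single n (d - 1)) = lk f a * (-1) ^ (d - 1)"
proof -
  let ?e = "\<lambda>i. Poly_Mapping.single n (d - Suc i) + Poly_Mapping.single (Suc n) i"
  have H: "Hp d n = (\<Sum>i<d. Poly_Mapping.single (?e i) ((-1) ^ (d - Suc i)) :: 'k mpoly)"
    unfolding Hp_def by (simp add: neg_Var_pow Var_pow mult_single)
  have "lk (f * Hp d n) (a + Poly_Mapping.single n (d - 1))
      = (\<Sum>i<d. lk (f * Poly_Mapping.single (?e i) ((-1) ^ (d - Suc i))) (a + Poly_Mapping.single n (d - 1)))"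
    by (simp add: H sum_distrib_left lookup_sum)
  also have "\<dots> = (\<Sum>i<d. if i = 0 then lk f a * (-1) ^ (d - 1) else 0)"
  proof (rule sum.cong)
    fix i assume "i \<in> {..<d}"
    show "lk (f * Poly_Mapping.single (?e i) ((-1) ^ (d - Suc i))) (a + Poly_Mapping.single n (d - 1))
        = (if i = 0 then lk f a * (-1) ^ (d - 1) else 0)"
    proof (cases "i = 0")
      case True
      then show ?thesis using lookup_mult_single[where p=f and x=a and e="Poly_Mapping.single n (d - 1)"] by simp
    next
      case False
      have "lk f (x + ?e i) \<noteq> 0 \<or> True" for x by simp
      have "x + ?e i \<noteq> a + Poly_Mapping.single n (d - 1)" for x
      proof
        assume "x + ?e i = a + Poly_Mapping.single n (d - 1)"
        then have "lk (x + ?e i) (Suc n) = lk (a + Poly_Mapping.single n (d - 1)) (Suc n)" by simp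
        moreover have "lk a (Suc n) = 0" using assms(2) by (rule lk_outside) simp
        ultimately show False using False by (simp add: lookup_add lookup_single)
      qed
      then show ?thesis using False lookup_mult_single_zero by metis
    qed
  qed simp
  also have "\<dots> = lk f a * (-1) ^ (d - 1)"
    using assms(3) by (simp add: sum.delta)
  finally show ?thesis .
qed

definition NI :: "nat \<Rightarrow> nat \<Rightarrow> (nat \<Rightarrow>\<^sub>0 nat) \<Rightarrow> nat \<Rightarrow> ('k::idom) mpoly \<Rightarrow> (nat \<Rightarrow>\<^sub>0 nat) \<Rightarrow> bool" where
  "NI n d e i f a \<longleftrightarrow> in_S n f \<and> homog i f \<and> lin_form n * f \<in> ideal_gen n (Gset n d e)
     \<and> lk f a \<noteq> 0 \<and> std n d e a \<and> ks a \<subseteq> {..<n}"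

lemma NI_final:
  fixes f :: "('k::idom) mpoly"
  assumes "NI n d e i f a"
  shows "\<not> mult_injective n (Gset n d e :: 'k mpoly set) i"
proof
  assume "mult_injective n (Gset n d e :: 'k mpoly set) i"
  then have "f \<in> ideal_gen n (Gset n d e)"
    using assms unfolding NI_def mult_injective_def by blast
  moreover have "f \<notin> ideal_gen n (Gset n d e)"
    using assms not_in_ideal[of f a n d e] unfolding NI_def by blast
  ultimately show False by blast
qed

lemma NI_step:
  fixes f :: "('k::idom) mpoly"
  assumes NI: "NI n d e i f a" and e: "ks e \<subseteq> {..<n}" and d: "d \<ge> 1"
  shows "NI (Suc (Suc n)) d e (i + (d - 1)) (f * Hp d n) (a + Poly_Mapping.single n (d - 1))"
proof -
  let ?I = "ideal_gen (Suc (Suc n)) (Gset (Suc (Suc n)) d e) :: 'k mpoly set"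
  from NI have f: "in_S n f" "homog i f" "lin_form n * f \<in> ideal_gen n (Gset n d e)"
    "lk f a \<noteq> 0" "std n d e a" "ks a \<subseteq> {..<n}"
    by (auto simp: NI_def)
  have fS: "in_S (Suc (Suc n)) f" using f(1) by (rule in_S_mono) simp
  have "in_S (Suc (Suc n)) (f * Hp d n)" using fS in_S_Hp by (rule in_S_mult)
  moreover have "homog (i + (d - 1)) (f * Hp d n)" using f(2) homog_Hp by (rule homog_mult)
  moreover have "lin_form (Suc (Suc n)) * (f * Hp d n) \<in> ?I"
  proof -
    have eq: "lin_form (Suc (Suc n)) * (f * Hp d n)
        = Hp d n * (lin_form n * f) + f * Var (Suc n) ^ d - (f * (-1) ^ d) * Var n ^ d"
    proof -
      have "lin_form (Suc (Suc n)) * (f * Hp d n)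
          = Hp d n * (lin_form n * f) + f * ((Var n + Var (Suc n)) * Hp d n)"
        by (simp add: lin_form_Suc algebra_simps)
      also have "\<dots> = Hp d n * (lin_form n * f) + f * (Var (Suc n) ^ d - (- Var n) ^ d)"
        by (simp only: Hp_identity)
      also have "\<dots> = Hp d n * (lin_form n * f) + f * Var (Suc n) ^ d - (f * (-1) ^ d) * Var n ^ d"
        by (simp only: power_minus[of "Var n"] right_diff_distrib mult.assoc add_diff_eq)
      finally show ?thesis .
    qed
    have "lin_form n * f \<in> ?I"
      using f(3) ideal_mono[OF finite_Gset Gset_mono[of n "Suc (Suc n)" d e], of n "Suc (Suc n)"] by auto
    then have 1: "Hp d n * (lin_form n * f) \<in> ?I" using in_S_Hp by (rule ideal_mult)
    have 2: "f * Var (Suc n) ^ d \<in> ?I"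
      by (rule ideal_gen_mem[OF finite_Gset Gset_pow fS]) simp
    have 3: "(f * (-1) ^ d) * Var n ^ d \<in> ?I"
      by (rule ideal_gen_mem[OF finite_Gset Gset_pow]) (simp, rule in_S_mult[OF fS in_S_pow[OF in_S_uminus[OF in_S_1]]])
    show ?thesis unfolding eq by (intro ideal_diff ideal_add 1 2 3)
  qed
  moreover have "lk (f * Hp d n) (a + Poly_Mapping.single n (d - 1)) \<noteq> 0"
    using lookup_Hp[OF f(1) f(6) d] f(4) by simp
  moreover have "std (Suc (Suc n)) d e (a + Poly_Mapping.single n (d - 1))"
  proof -
    have lt: "lk a j = 0" if "j \<ge> n" for j
      using f(6) that by (rule lk_outside)
    have "\<forall>j<Suc (Suc n). lk (a + Poly_Mapping.single n (d - 1)) j < d"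
    proof (intro allI impI)
      fix j assume "j < Suc (Suc n)"
      then consider "j < n" | "j = n" | "j = Suc n" by linarith
      then show "lk (a + Poly_Mapping.single n (d - 1)) j < d"
        using f(5) lt d by cases (auto simp: std_def lookup_add lookup_single)
    qed
    moreover have "\<not> (\<forall>j. lk e j \<le> lk (a + Poly_Mapping.single n (d - 1)) j)"
    proof
      assume A: "\<forall>j. lk e j \<le> lk (a + Poly_Mapping.single n (d - 1)) j"
      have "lk e j \<le> lk a j" for j
      proof (cases "j < n")
        case True then show ?thesis using A[rule_format, of j] by (simp add: lookup_add lookup_single)
      next
        case False
        then have "lk e j = 0" using e by (intro lk_outside) auto
        then show ?thesis by simp
      qed
      then show False using f(5) by (simp add: std_def)
    qed
    ultimately show ?thesis by (simp add: std_def)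
  qed
  moreover have "ks (a + Poly_Mapping.single n (d - 1)) \<subseteq> {..<Suc (Suc n)}"
    using f(6) by (auto simp: keys_add_nat split: if_splits)
  ultimately show ?thesis by (simp add: NI_def)
qed

lemma NI_iter:
  fixes f :: "('k::idom) mpoly"
  assumes "NI n d e i f a" "ks e \<subseteq> {..<n}" "d \<ge> 1"
  shows "\<exists>f' a'. NI (n + 2 * k) d e (i + k * (d - 1)) (f' :: 'k mpoly) a'"
proof (induction k)
  case 0
  then show ?case using assms(1) by auto
next
  case (Suc k)
  then obtain f' a' where "NI (n + 2 * k) d e (i + k * (d - 1)) (f' :: 'k mpoly) a'" by blast
  moreover have "ks e \<subseteq> {..<n + 2 * k}" using assms(2) by auto
  ultimately have NIs: "NI (Suc (Suc (n + 2 * k))) d e (i + k * (d - 1) + (d - 1)) (f' * Hp d (n + 2 * k)) (a' + Poly_Mapping.single (n + 2 * k) (d - 1))"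
    using NI_step assms(3) by blast
  have eqs: "Suc (Suc (n + 2 * k)) = n + 2 * Suc k" "i + k * (d - 1) + (d - 1) = i + Suc k * (d - 1)"
    by simp_all
  show ?case using NIs unfolding eqs by blast
qed


section \<open>Non-surjectivity via a functional\<close>

definition phi :: "((nat \<Rightarrow>\<^sub>0 nat) \<Rightarrow> 'k) \<Rightarrow> ('k::comm_ring_1) mpoly \<Rightarrow> 'k" where
  "phi C p = (\<Sum>a\<in>ks p. C a * lk p a)"

lemma phi_superset:
  assumes "finite K" "ks p \<subseteq> K"
  shows "phi C p = (\<Sum>a\<in>K. C a * lk p a)"
  unfolding phi_def by (rule sum.mono_neutral_left) (use assms in \<open>auto simp: in_keys_iff\<close>)

lemma phi_add: "phi C (p + q) = phi C p + phi C q"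
proof -
  let ?K = "ks p \<union> ks q"
  have "phi C (p + q) = (\<Sum>a\<in>?K. C a * lk (p + q) a)"
    by (rule phi_superset) (use keys_add[of p q] in auto)
  also have "\<dots> = (\<Sum>a\<in>?K. C a * lk p a) + (\<Sum>a\<in>?K. C a * lk q a)"
    by (simp add: lookup_add distrib_left sum.distrib)
  also have "\<dots> = phi C p + phi C q"
  proof -
    have "phi C p = (\<Sum>a\<in>?K. C a * lk p a)" by (rule phi_superset) auto
    moreover have "phi C q = (\<Sum>a\<in>?K. C a * lk q a)" by (rule phi_superset) auto
    ultimately show ?thesis by simp
  qed
  finally show ?thesis .
qed

lemma phi_uminus: "phi C (- p) = - phi C p"
  by (simp add: phi_def sum_negf)

lemma phi_diff: "phi C (p - q) = phi C p - phi C q"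
  using phi_add[of C p "- q"] by (simp add: phi_uminus)

lemma phi_0: "phi C 0 = 0"
  by (simp add: phi_def)

lemma phi_sum: "phi C (sum f A) = (\<Sum>i\<in>A. phi C (f i))"
  by (induction A rule: infinite_finite_induct) (auto simp: phi_0 phi_add)

lemma phi_mult_single:
  fixes q :: "('k::comm_ring_1) mpoly"
  shows "phi C (q * Poly_Mapping.single e 1) = (\<Sum>x\<in>ks q. C (x + e) * lk q x)"
proof -
  have inj: "inj_on (\<lambda>x. x + e) (ks q)"
    by (rule inj_onI) simp
  have "phi C (q * Poly_Mapping.single e 1) = (\<Sum>a\<in>(\<lambda>x. x + e) ` ks q. C a * lk (q * Poly_Mapping.single e 1) a)"
    by (rule phi_superset) (auto intro: keys_mult_single[THEN subsetD])
  also have "\<dots> = (\<Sum>x\<in>ks q. C (x + e) * lk (q * Poly_Mapping.single e 1) (x + e))"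
    by (simp add: sum.reindex[OF inj])
  also have "\<dots> = (\<Sum>x\<in>ks q. C (x + e) * lk q x)"
    by (simp add: lookup_mult_single)
  finally show ?thesis .
qed

lemma phi_ideal:
  fixes p :: "('k::comm_ring_1) mpoly"
  assumes "p \<in> ideal_gen n G"
    and van: "\<And>g. g \<in> G \<Longrightarrow> \<exists>e. g = Poly_Mapping.single e 1 \<and> (\<forall>x. C (x + e) = 0)"
  shows "phi C p = 0"
proof -
  obtain q where q: "p = (\<Sum>g\<in>G. q g * g)"
    using assms(1) unfolding ideal_gen_def by blast
  have "phi C (q g * g) = 0" if g: "g \<in> G" for g
  proof -
    obtain e where e: "g = Poly_Mapping.single e 1" "\<forall>x. C (x + e) = 0" using van[OF g] by blast
    show ?thesis unfolding e(1) phi_mult_single using e(2) by simp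
  qed
  then show ?thesis unfolding q phi_sum by simp
qed

lemma lin_form_mult:
  fixes f :: "('k::comm_ring_1) mpoly"
  shows "lin_form n * f = (\<Sum>j<n. f * Poly_Mapping.single (Poly_Mapping.single j 1) 1)"
proof -
  have "lin_form n * f = f * lin_form n" by (rule mult.commute)
  also have "\<dots> = (\<Sum>j<n. f * Poly_Mapping.single (Poly_Mapping.single j 1) 1)"
    by (simp add: lin_form_def Var_def sum_distrib_left)
  finally show ?thesis .
qed

lemma phi_L:
  fixes f :: "('k::comm_ring_1) mpoly"
  assumes bal: "\<And>x. (\<Sum>j<n. C (x + Poly_Mapping.single j 1)) = 0"
  shows "phi C (lin_form n * f) = 0"
proof -
  have "phi C (lin_form n * f) = (\<Sum>j<n. \<Sum>x\<in>ks f. C (x + Poly_Mapping.single j 1) * lk f x)"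
    by (simp add: lin_form_mult phi_sum phi_mult_single)
  also have "\<dots> = (\<Sum>x\<in>ks f. (\<Sum>j<n. C (x + Poly_Mapping.single j 1)) * lk f x)"
    by (subst sum.swap) (simp add: sum_distrib_right)
  also have "\<dots> = 0" by (simp only: bal mult_zero_left sum.neutral_const)
  finally show ?thesis .
qed

definition NS :: "nat \<Rightarrow> nat \<Rightarrow> (nat \<Rightarrow>\<^sub>0 nat) \<Rightarrow> nat \<Rightarrow> ((nat \<Rightarrow>\<^sub>0 nat) \<Rightarrow> 'k::idom) \<Rightarrow> (nat \<Rightarrow>\<^sub>0 nat) \<Rightarrow> bool" where
  "NS n d e D C a \<longleftrightarrow> (\<forall>x. (\<Sum>j<n. C (x + Poly_Mapping.single j 1)) = 0)
     \<and> (\<forall>x y. (\<forall>j<n. lk x j = lk y j) \<longrightarrow> C x = C y)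
     \<and> (\<forall>x. (\<exists>j<n. d \<le> lk x j) \<longrightarrow> C x = 0)
     \<and> (\<forall>x. (\<forall>j. lk e j \<le> lk x j) \<longrightarrow> C x = 0)
     \<and> C a \<noteq> 0 \<and> ks a \<subseteq> {..<n} \<and> mdeg a = D"

lemma NS_final:
  fixes C :: "(nat \<Rightarrow>\<^sub>0 nat) \<Rightarrow> 'k::idom"
  assumes "NS n d e (Suc i) C a"
  shows "\<not> mult_surjective n (Gset n d e :: 'k mpoly set) i"
proof
  assume surj: "mult_surjective n (Gset n d e :: 'k mpoly set) i"
  from assms have C: "\<forall>x. (\<Sum>j<n. C (x + Poly_Mapping.single j 1)) = 0"
     "\<forall>x. (\<exists>j<n. d \<le> lk x j) \<longrightarrow> C x = 0"
     "\<forall>x. (\<forall>j. lk e j \<le> lk x j) \<longrightarrow> C x = 0"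
     "C a \<noteq> 0" "ks a \<subseteq> {..<n}" "mdeg a = Suc i"
    by (auto simp: NS_def)
  let ?g = "Poly_Mapping.single a 1 :: 'k mpoly"
  have "in_S n ?g" using C(5) by (rule in_S_single)
  moreover have "homog (Suc i) ?g" using C(6) by (rule homog_single)
  ultimately obtain f where f: "in_S n f" "homog i f" "?g - lin_form n * f \<in> ideal_gen n (Gset n d e)"
    using surj unfolding mult_surjective_def by blast
  have "phi C (?g - lin_form n * f) = 0"
  proof (rule phi_ideal[OF f(3)])
    fix g :: "'k mpoly" assume "g \<in> Gset n d e"
    then consider "g = Poly_Mapping.single e 1" | j where "j < n" "g = Var j ^ d"
      unfolding Gset_def pure_powers_def by blast
    then show "\<exists>e. g = Poly_Mapping.single e 1 \<and> (\<forall>x. C (x + e) = 0)"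
    proof cases
      case 1
      then show ?thesis using C(3) by (auto simp: lookup_add)
    next
      case (2 j)
      have "\<forall>x. C (x + Poly_Mapping.single j d) = 0"
      proof
        fix x
        have "d \<le> lk (x + Poly_Mapping.single j d) j" by (simp add: lookup_add)
        then show "C (x + Poly_Mapping.single j d) = 0" using C(2) \<open>j < n\<close> by blast
      qed
      then show ?thesis using 2 by (auto simp: Var_pow)
    qed
  qed
  moreover have "phi C (lin_form n * f) = 0"
    using C(1) by (intro phi_L) auto
  moreover have "phi C ?g = C a"
    by (simp add: phi_def)
  ultimately show False using C(4) by (simp add: phi_diff)
qed

definition sp :: "nat \<Rightarrow> nat \<Rightarrow> nat \<Rightarrow> 'k::comm_ring_1" where
  "sp d u v = (if u + v = d - 1 then (-1) ^ u else 0)"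

lemma sp_bal: "sp d (Suc u) v + sp d u (Suc v) = (0::'k::comm_ring_1)"
  by (simp add: sp_def)

lemma NS_step:
  fixes C :: "(nat \<Rightarrow>\<^sub>0 nat) \<Rightarrow> 'k::idom"
  assumes NS: "NS n d e D C a" and d: "d \<ge> 1"
  shows "NS (Suc (Suc n)) d e (D + (d - 1)) (\<lambda>x. C x * sp d (lk x n) (lk x (Suc n))) (a + Poly_Mapping.single n (d - 1))"
proof -
  from NS have C: "\<And>x. (\<Sum>j<n. C (x + Poly_Mapping.single j 1)) = 0"
     "\<And>x y. (\<forall>j<n. lk x j = lk y j) \<Longrightarrow> C x = C y"
     "\<And>x. (\<exists>j<n. d \<le> lk x j) \<Longrightarrow> C x = 0"
     "\<And>x. (\<forall>j. lk e j \<le> lk x j) \<Longrightarrow> C x = 0"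
     "C a \<noteq> 0" "ks a \<subseteq> {..<n}" "mdeg a = D"
    unfolding NS_def by blast+
  let ?C = "\<lambda>x. C x * sp d (lk x n) (lk x (Suc n)) :: 'k"
  let ?a = "a + Poly_Mapping.single n (d - 1)"
  have bal: "(\<Sum>j<Suc (Suc n). ?C (x + Poly_Mapping.single j 1)) = 0" for x
  proof -
    have 1: "(\<Sum>j<n. ?C (x + Poly_Mapping.single j 1)) = (\<Sum>j<n. C (x + Poly_Mapping.single j 1)) * sp d (lk x n) (lk x (Suc n))"
      by (simp add: sum_distrib_right lookup_add lookup_single)
    have 2: "C (x + Poly_Mapping.single n 1) = C x" "C (x + Poly_Mapping.single (Suc n) 1) = C x"
      by (auto intro!: C(2) simp: lookup_add lookup_single)
    have "(\<Sum>j<Suc (Suc n). ?C (x + Poly_Mapping.single j 1))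
        = (\<Sum>j<n. ?C (x + Poly_Mapping.single j 1)) + ?C (x + Poly_Mapping.single n 1) + ?C (x + Poly_Mapping.single (Suc n) 1)"
      by simp
    also have "\<dots> = C x * (sp d (Suc (lk x n)) (lk x (Suc n)) + sp d (lk x n) (Suc (lk x (Suc n))))"
    proof -
      have 3: "(\<Sum>j<n. ?C (x + Poly_Mapping.single j 1)) = 0" by (simp only: 1 C(1) mult_zero_left)
      have 4: "?C (x + Poly_Mapping.single n 1) = C x * sp d (Suc (lk x n)) (lk x (Suc n))"
        using 2(1) by (simp add: lookup_add lookup_single)
      have 5: "?C (x + Poly_Mapping.single (Suc n) 1) = C x * sp d (lk x n) (Suc (lk x (Suc n)))"
        using 2(2) by (simp add: lookup_add lookup_single)
      show ?thesis by (simp only: 3 4 5 distrib_left add_0_left)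
    qed
    also have "\<dots> = 0" by (simp add: sp_bal)
    finally show ?thesis .
  qed
  have loc: "?C x = ?C y" if "\<forall>j<Suc (Suc n). lk x j = lk y j" for x y
  proof -
    have "C x = C y" using that by (intro C(2)) auto
    moreover have "lk x n = lk y n" "lk x (Suc n) = lk y (Suc n)" using that by auto
    ultimately show ?thesis by simp
  qed
  have vpow: "?C x = 0" if "\<exists>j<Suc (Suc n). d \<le> lk x j" for x
  proof -
    from that obtain j where j: "j < Suc (Suc n)" "d \<le> lk x j" by blast
    then consider "j < n" | "j = n" | "j = Suc n" by linarith
    then show ?thesis
    proof cases
      case 1 then show ?thesis using C(3) j by auto
    next
      case 2 then show ?thesis using j d by (auto simp: sp_def)
    next
      case 3 then show ?thesis using j d by (auto simp: sp_def)
    qed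
  qed
  have vmu: "?C x = 0" if "\<forall>j. lk e j \<le> lk x j" for x
    using C(4) that by simp
  have an: "lk a n = 0" "lk a (Suc n) = 0" using C(6) by (auto intro: lk_outside)
  have "C ?a = C a" by (intro C(2)) (auto simp: lookup_add lookup_single)
  then have "?C ?a = C a * (-1) ^ (d - 1)"
    using an by (simp add: lookup_add lookup_single sp_def)
  then have nz: "?C ?a \<noteq> 0" using C(5) by simp
  have ks: "ks ?a \<subseteq> {..<Suc (Suc n)}"
    using C(6) by (auto simp: keys_add_nat split: if_splits)
  have md: "mdeg ?a = D + (d - 1)" using C(7) by (simp add: mdeg_add mdeg_single)
  show ?thesis unfolding NS_def using bal loc vpow vmu nz ks md by blast
qed

lemma NS_iter:
  fixes C :: "(nat \<Rightarrow>\<^sub>0 nat) \<Rightarrow> 'k::idom"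
  assumes "NS n d e D C a" "d \<ge> 1"
  shows "\<exists>C' a'. NS (n + 2 * k) d e (D + k * (d - 1)) (C' :: (nat \<Rightarrow>\<^sub>0 nat) \<Rightarrow> 'k) a'"
proof (induction k)
  case 0
  then show ?case using assms(1) by auto
next
  case (Suc k)
  then obtain C' a' where "NS (n + 2 * k) d e (D + k * (d - 1)) (C' :: (nat \<Rightarrow>\<^sub>0 nat) \<Rightarrow> 'k) a'" by blast
  from NS_step[OF this assms(2)]
  have NSs: "NS (Suc (Suc (n + 2 * k))) d e (D + k * (d - 1) + (d - 1)) (\<lambda>x. C' x * sp d (lk x (n + 2 * k)) (lk x (Suc (n + 2 * k)))) (a' + Poly_Mapping.single (n + 2 * k) (d - 1))" .
  have eqs: "Suc (Suc (n + 2 * k)) = n + 2 * Suc k" "D + k * (d - 1) + (d - 1) = D + Suc k * (d - 1)"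
    by simp_all
  show ?case using NSs unfolding eqs by blast
qed


definition mon :: "nat list \<Rightarrow> (nat \<Rightarrow>\<^sub>0 nat)" where
  "mon l = (\<Sum>j<length l. Poly_Mapping.single j (l ! j))"

lemma lk_mono: "lk (mon l) j = (if j < length l then l ! j else 0)"
  by (simp add: mon_def lookup_sum lookup_single when_def)

lemma mono_eq_iff: "length l = length l' \<Longrightarrow> mon l = mon l' \<longleftrightarrow> l = l'"
proof
  assume len: "length l = length l'" and eq: "mon l = mon l'"
  show "l = l'"
  proof (rule nth_equalityI)
    show "length l = length l'" by fact
    fix i assume "i < length l"
    then show "l ! i = l' ! i" using arg_cong[OF eq, of "\<lambda>m. lk m i"] len by (simp add: lk_mono)
  qed
qed simp

lemma ks_mono: "ks (mon l) \<subseteq> {..<length l}"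
proof
  fix x assume "x \<in> ks (mon l)"
  then have "lk (mon l) x \<noteq> 0" by (simp add: in_keys_iff)
  then show "x \<in> {..<length l}" by (simp add: lk_mono split: if_splits)
qed

lemma ks_mono': "length l = n \<Longrightarrow> ks (mon l) \<subseteq> {..<n}"
  using ks_mono[of l] by simp

lemma mdeg_mono: "mdeg (mon l) = sum_list l"
proof -
  have "mdeg (mon l) = (\<Sum>j<length l. lk (mon l) j)"
    by (rule mdeg_superset) (use ks_mono[of l] in auto)
  also have "\<dots> = (\<Sum>j<length l. l ! j)" by (simp add: lk_mono)
  also have "\<dots> = sum_list l" by (simp add: sum_list_sum_nth atLeast0LessThan)
  finally show ?thesis .
qed

lemma mono_bound: "length l = n \<Longrightarrow> list_all (\<lambda>x. x < d) l \<Longrightarrow> (\<forall>j<n. lk (mon l) j < d)"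
  by (auto simp: lk_mono list_all_length)

lemma mono_le: "(\<forall>j. lk (mon l1) j \<le> lk (mon l2) j) \<Longrightarrow> length l1 = length l2 \<Longrightarrow> list_all2 (\<le>) l1 l2"
  by (auto simp: list_all2_conv_all_nth lk_mono) (metis)

lemma single_sum_prod:
  "finite A \<Longrightarrow> Poly_Mapping.single (\<Sum>j\<in>A. e j) (1::'k::comm_ring_1) = (\<Prod>j\<in>A. Poly_Mapping.single (e j) 1)"
proof (induction A rule: finite_induct)
  case empty
  then show ?case by simp
next
  case (insert x F)
  have "(\<Prod>j\<in>insert x F. Poly_Mapping.single (e j) (1::'k)) = Poly_Mapping.single (e x) 1 * Poly_Mapping.single (sum e F) 1"
    using insert by simp
  also have "\<dots> = Poly_Mapping.single (e x + sum e F) 1" by (simp add: mult_single)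
  finally show ?case using insert by simp
qed

definition Xm :: "nat list \<Rightarrow> ('k::comm_ring_1) mpoly" where
  "Xm l = Poly_Mapping.single (mon l) 1"

lemma Xm_prod: "Xm l = (\<Prod>j<length l. Var j ^ (l ! j))"
  by (simp add: Xm_def mon_def single_sum_prod Var_pow)

definition Cf :: "int \<Rightarrow> nat list \<Rightarrow> ('k::comm_ring_1) mpoly" where
  "Cf c l = of_int c * Xm l"

lemma Cf_single: "Cf c l = Poly_Mapping.single (mon l) (of_int c)"
proof -
  have eq: "(of_int c :: 'a mpoly) = Poly_Mapping.single 0 (of_int c)" by simp
  show ?thesis unfolding Cf_def Xm_def by (subst eq, subst mult_single, simp)
qed

lemma lk_Cf: "length l = length l' \<Longrightarrow> lk (Cf c l) (mon l') = (if l = l' then of_int c else 0)"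
  by (simp add: Cf_single lookup_single when_def mono_eq_iff)

lemma in_S_Cf: "length l \<le> n \<Longrightarrow> in_S n (Cf c l)"
  unfolding Cf_single by (rule in_S_single) (use ks_mono[of l] in auto)

lemma homog_Cf: "sum_list l = i \<Longrightarrow> homog i (Cf c l)"
  unfolding Cf_single by (rule homog_single) (simp add: mdeg_mono)

lemma in_S_numeral: "in_S n (numeral k)"
  by (metis in_S_single keys_zero empty_subsetI single_numeral)


lemma Xm4: "Xm [a,b,c,d] = Var 0 ^ a * Var 1 ^ b * Var 2 ^ c * Var 3 ^ d"
  by (simp add: Xm_prod lessThan_Suc eval_nat_numeral mult_ac)

lemma Xm6: "Xm [a,b,c,d,e,f] = Var 0 ^ a * Var 1 ^ b * Var 2 ^ c * Var 3 ^ d * Var 4 ^ e * Var 5 ^ f"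
  by (simp add: Xm_prod lessThan_Suc eval_nat_numeral mult_ac)

lemma lin4: "lin_form 4 = Var 0 + Var 1 + Var 2 + Var 3"
  by (simp add: lin_form_def lessThan_Suc eval_nat_numeral add_ac)

lemma lin6: "lin_form 6 = Var 0 + Var 1 + Var 2 + Var 3 + Var 4 + Var 5"
  by (simp add: lin_form_def lessThan_Suc eval_nat_numeral add_ac)

lemma memP: "j < n \<Longrightarrow> in_S n Q \<Longrightarrow> Q * Var j ^ d \<in> ideal_gen n (Gset n d e)"
  by (rule ideal_gen_mem[OF finite_Gset Gset_pow])

lemma memM: "in_S n Q \<Longrightarrow> Q * Xm l \<in> ideal_gen n (Gset n d (mon l))"
  unfolding Xm_def by (rule ideal_gen_mem[OF finite_Gset Gset_mu])

lemmas in_S_simps = in_S_add in_S_diff in_S_mult in_S_pow in_S_Var in_S_numeral in_S_uminus in_S_Cf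

lemma std_mon:
  assumes "length l = n" "list_all (\<lambda>x. x < d) l" "length le = n" "\<not> list_all2 (\<le>) le l"
  shows "std n d (mon le) (mon l)"
  unfolding std_def using mono_bound[OF assms(1,2)] mono_le[of le l] assms(3,4,1) by auto

definition f2 :: "('k::comm_ring_1) mpoly" where
  "f2 = Cf (-3) [0,0,2,3] + Cf 3 [0,0,3,2] + Cf 2 [0,1,1,3] + Cf 1 [0,1,2,2] + Cf (-4) [0,1,3,1] + Cf (-2) [0,2,1,2] + Cf 1 [0,2,2,1] + Cf 3 [0,2,3,0] + Cf 2 [0,3,1,1] + Cf (-3) [0,3,2,0] + Cf 2 [1,0,1,3] + Cf 1 [1,0,2,2] + Cf (-4) [1,0,3,1] + Cf (-4) [1,1,3,0] + Cf 1 [1,2,2,0] + Cf 2 [1,3,1,0] + Cf (-2) [2,0,1,2] + Cf 1 [2,0,2,1] + Cf 3 [2,0,3,0] + Cf 1 [2,1,2,0] + Cf (-2) [2,2,1,0] + Cf 2 [3,0,1,1] + Cf (-3) [3,0,2,0] + Cf 2 [3,1,1,0]"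

lemma case2_NI: "NI 4 4 (mon [1,1,1,1]) 5 (f2 :: ('k::{idom,ring_char_0}) mpoly) (mon [0,0,2,3])"
proof -
  have S: "in_S 4 (f2 :: 'k mpoly)" unfolding f2_def by (simp add: in_S_simps)
  have H: "homog 5 (f2 :: 'k mpoly)" unfolding f2_def by (simp add: homog_add homog_Cf)
  have L: "lin_form 4 * (f2 :: 'k mpoly) = (2 * Var 2 * Var 3 - 3 * Var 2 ^ 2 + 2 * Var 1 * Var 2) * Var 0 ^ 4 + (2 * Var 2 * Var 3 - 3 * Var 2 ^ 2 + 2 * Var 0 * Var 2) * Var 1 ^ 4 + (3 * Var 3 ^ 2 - 4 * Var 1 * Var 3 + 3 * Var 1 ^ 2 - 4 * Var 0 * Var 3 - 4 * Var 0 * Var 1 + 3 * Var 0 ^ 2) * Var 2 ^ 4 + (- 3 * Var 2 ^ 2 + 2 * Var 1 * Var 2 + 2 * Var 0 * Var 2) * Var 3 ^ 4 + (4 * Var 3 ^ 2 + 2 * Var 2 * Var 3 - 12 * Var 2 ^ 2 - 2 * Var 1 * Var 3 + 2 * Var 1 * Var 2 + 4 * Var 1 ^ 2 - 2 * Var 0 * Var 3 + 2 * Var 0 * Var 2 - 2 * Var 0 * Var 1 + 4 * Var 0 ^ 2) * Xm [1,1,1,1]"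
    unfolding f2_def Cf_def lin4 by (simp add: Xm4 algebra_simps power_def eval_nat_numeral)
  have I: "((2 * Var 2 * Var 3 - 3 * Var 2 ^ 2 + 2 * Var 1 * Var 2) * Var 0 ^ 4 + (2 * Var 2 * Var 3 - 3 * Var 2 ^ 2 + 2 * Var 0 * Var 2) * Var 1 ^ 4 + (3 * Var 3 ^ 2 - 4 * Var 1 * Var 3 + 3 * Var 1 ^ 2 - 4 * Var 0 * Var 3 - 4 * Var 0 * Var 1 + 3 * Var 0 ^ 2) * Var 2 ^ 4 + (- 3 * Var 2 ^ 2 + 2 * Var 1 * Var 2 + 2 * Var 0 * Var 2) * Var 3 ^ 4 + (4 * Var 3 ^ 2 + 2 * Var 2 * Var 3 - 12 * Var 2 ^ 2 - 2 * Var 1 * Var 3 + 2 * Var 1 * Var 2 + 4 * Var 1 ^ 2 - 2 * Var 0 * Var 3 + 2 * Var 0 * Var 2 - 2 * Var 0 * Var 1 + 4 * Var 0 ^ 2) * Xm [1,1,1,1] :: 'k mpoly) \<in> ideal_gen 4 (Gset 4 4 (mon [1,1,1,1]))"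
    by (intro ideal_add memP memM) (simp_all add: in_S_simps)
  have lk: "lk (f2 :: 'k mpoly) (mon [0,0,2,3]) = -3"
    unfolding f2_def by (simp add: lookup_add lk_Cf)
  have std: "std 4 4 (mon [1,1,1,1]) (mon [0,0,2,3])"
    by (rule std_mon) auto
  show ?thesis unfolding NI_def using S H L I lk std ks_mono[of "[0,0,2,3]"] by auto
qed


definition f3 :: "('k::comm_ring_1) mpoly" where
  "f3 = Cf 1 [0,0,2,0,1,2] + Cf (-1) [0,0,2,0,2,1] + Cf (-1) [0,0,2,1,0,2] + Cf 1 [0,0,2,1,2,0] + Cf 1 [0,0,2,2,0,1] + Cf (-1) [0,0,2,2,1,0] + Cf (-1) [0,1,1,0,1,2] + Cf 1 [0,1,1,0,2,1] + Cf 1 [0,1,1,1,0,2] + Cf (-1) [0,1,1,1,2,0] + Cf (-1) [0,1,1,2,0,1] + Cf 1 [0,1,1,2,1,0] + Cf 1 [0,2,0,0,1,2] + Cf (-1) [0,2,0,0,2,1] + Cf (-1) [0,2,0,1,0,2] + Cf 1 [0,2,0,1,2,0] + Cf 1 [0,2,0,2,0,1] + Cf (-1) [0,2,0,2,1,0] + Cf (-1) [1,0,1,0,1,2] + Cf 1 [1,0,1,0,2,1] + Cf 1 [1,0,1,1,0,2] + Cf (-1) [1,0,1,1,2,0] + Cf (-1) [1,0,1,2,0,1] + Cf 1 [1,0,1,2,1,0] + Cf (-1) [1,1,0,0,1,2] + Cf 1 [1,1,0,0,2,1] + Cf 1 [1,1,0,1,0,2] + Cf (-1) [1,1,0,1,2,0]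 + Cf (-1) [1,1,0,2,0,1] + Cf 1 [1,1,0,2,1,0] + Cf 1 [2,0,0,0,1,2] + Cf (-1) [2,0,0,0,2,1] + Cf (-1) [2,0,0,1,0,2] + Cf 1 [2,0,0,1,2,0] + Cf 1 [2,0,0,2,0,1] + Cf (-1) [2,0,0,2,1,0]"

lemma case3_NI: "NI 6 3 (mon [1,1,1,0,0,0]) 5 (f3 :: ('k::{idom,ring_char_0}) mpoly) (mon [0,0,2,0,1,2])"
proof -
  have S: "in_S 6 (f3 :: 'k mpoly)" unfolding f3_def by (simp add: in_S_simps)
  have H: "homog 5 (f3 :: 'k mpoly)" unfolding f3_def by (simp add: homog_add homog_Cf)
  have L: "lin_form 6 * (f3 :: 'k mpoly) = (Var 4 * Var 5 ^ 2 - 1 * Var 4 ^ 2 * Var 5 - 1 * Var 3 * Var 5 ^ 2 + Var 3 * Var 4 ^ 2 + Var 3 ^ 2 * Var 5 - 1 * Var 3 ^ 2 * Var 4) * Var 0 ^ 3 + (Var 4 * Var 5 ^ 2 - 1 * Var 4 ^ 2 * Var 5 - 1 * Var 3 * Var 5 ^ 2 + Var 3 * Var 4 ^ 2 + Var 3 ^ 2 * Var 5 - 1 * Var 3 ^ 2 * Var 4) * Var 1 ^ 3 + (Var 4 * Var 5 ^ 2 - 1 * Var 4 ^ 2 * Var 5 - 1 * Var 3 * Var 5 ^ 2 + Var 3 * Var 4 ^ 2 + Var 3 ^ 2 * Var 5 - 1 * Var 3 ^ 2 * Var 4) * Var 2 ^ 3 + (Var 2 ^ 2 * Var 5 - 1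 * Var 2 ^ 2 * Var 4 - 1 * Var 1 * Var 2 * Var 5 + Var 1 * Var 2 * Var 4 + Var 1 ^ 2 * Var 5 - 1 * Var 1 ^ 2 * Var 4 - 1 * Var 0 * Var 2 * Var 5 + Var 0 * Var 2 * Var 4 - 1 * Var 0 * Var 1 * Var 5 + Var 0 * Var 1 * Var 4 + Var 0 ^ 2 * Var 5 - 1 * Var 0 ^ 2 * Var 4) * Var 3 ^ 3 + (- 1 * Var 2 ^ 2 * Var 5 + Var 2 ^ 2 * Var 3 + Var 1 * Var 2 * Var 5 - 1 * Var 1 * Var 2 * Var 3 - 1 * Var 1 ^ 2 * Var 5 + Var 1 ^ 2 * Var 3 + Var 0 * Var 2 * Var 5 - 1 * Var 0 * Var 2 * Var 3 + Var 0 * Var 1 * Var 5 - 1 * Var 0 * Var 1 * Var 3 - 1 * Var 0 ^ 2 * Var 5 + Var 0 ^ 2 * Var 3) * Var 4 ^ 3 + (Var 2 ^ 2 * Var 4 - 1 * Var 2 ^ 2 * Var 3 - 1 * Var 1 * Var 2 * Var 4 + Var 1 * Var 2 * Var 3 + Var 1 ^ 2 * Var 4 - 1 * Var 1 ^ 2 * Var 3 - 1 * Var 0 * Var 2 * Var 4 + Var 0 * Var 2 * Var 3 - 1 * Var 0 * Var 1 * Var 4 + Var 0 * Var 1 * Var 3 + Var 0 ^ 2 * Var 4 - 1 * Var 0 ^ 2 * Var 3) * Var 5 ^ 3 + (- 3 * Var 4 * Var 5 ^ 2 + 3 * Var 4 ^ 2 * Var 5 + 3 * Var 3 * Var 5 ^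 2 - 3 * Var 3 * Var 4 ^ 2 - 3 * Var 3 ^ 2 * Var 5 + 3 * Var 3 ^ 2 * Var 4) * Xm [1,1,1,0,0,0]"
    unfolding f3_def Cf_def lin6 by (simp add: Xm6 algebra_simps power_def eval_nat_numeral)
  have I: "((Var 4 * Var 5 ^ 2 - 1 * Var 4 ^ 2 * Var 5 - 1 * Var 3 * Var 5 ^ 2 + Var 3 * Var 4 ^ 2 + Var 3 ^ 2 * Var 5 - 1 * Var 3 ^ 2 * Var 4) * Var 0 ^ 3 + (Var 4 * Var 5 ^ 2 - 1 * Var 4 ^ 2 * Var 5 - 1 * Var 3 * Var 5 ^ 2 + Var 3 * Var 4 ^ 2 + Var 3 ^ 2 * Var 5 - 1 * Var 3 ^ 2 * Var 4) * Var 1 ^ 3 + (Var 4 * Var 5 ^ 2 - 1 * Var 4 ^ 2 * Var 5 - 1 * Var 3 * Var 5 ^ 2 + Var 3 * Var 4 ^ 2 + Var 3 ^ 2 * Var 5 - 1 * Var 3 ^ 2 * Var 4) * Var 2 ^ 3 + (Var 2 ^ 2 * Var 5 - 1 * Var 2 ^ 2 * Var 4 - 1 * Var 1 * Var 2 * Var 5 + Var 1 * Var 2 * Var 4 + Var 1 ^ 2 * Var 5 - 1 * Var 1 ^ 2 * Var 4 - 1 * Var 0 * Var 2 * Var 5 + Var 0 * Var 2 * Var 4 - 1 * Var 0 * Var 1 * Var 5 + Var 0 * Var 1 * Var 4 + Var 0 ^ 2 * Var 5 - 1 * Var 0 ^ 2 * Var 4) * Var 3 ^ 3 + (- 1 *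 Var 2 ^ 2 * Var 5 + Var 2 ^ 2 * Var 3 + Var 1 * Var 2 * Var 5 - 1 * Var 1 * Var 2 * Var 3 - 1 * Var 1 ^ 2 * Var 5 + Var 1 ^ 2 * Var 3 + Var 0 * Var 2 * Var 5 - 1 * Var 0 * Var 2 * Var 3 + Var 0 * Var 1 * Var 5 - 1 * Var 0 * Var 1 * Var 3 - 1 * Var 0 ^ 2 * Var 5 + Var 0 ^ 2 * Var 3) * Var 4 ^ 3 + (Var 2 ^ 2 * Var 4 - 1 * Var 2 ^ 2 * Var 3 - 1 * Var 1 * Var 2 * Var 4 + Var 1 * Var 2 * Var 3 + Var 1 ^ 2 * Var 4 - 1 * Var 1 ^ 2 * Var 3 - 1 * Var 0 * Var 2 * Var 4 + Var 0 * Var 2 * Var 3 - 1 * Var 0 * Var 1 * Var 4 + Var 0 * Var 1 * Var 3 + Var 0 ^ 2 * Var 4 - 1 * Var 0 ^ 2 * Var 3) * Var 5 ^ 3 + (- 3 * Var 4 * Var 5 ^ 2 + 3 * Var 4 ^ 2 * Var 5 + 3 * Var 3 * Var 5 ^ 2 - 3 * Var 3 * Var 4 ^ 2 - 3 * Var 3 ^ 2 * Var 5 + 3 * Var 3 ^ 2 * Var 4) * Xm [1,1,1,0,0,0] :: 'k mpoly) \<in> ideal_gen 6 (Gset 6 3 (mon [1,1,1,0,0,0]))"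
    by (intro ideal_add memP memM) (simp_all add: in_S_simps)
  have lk: "lk (f3 :: 'k mpoly) (mon [0,0,2,0,1,2]) = 1"
    unfolding f3_def by (simp add: lookup_add lk_Cf)
  have std: "std 6 3 (mon [1,1,1,0,0,0]) (mon [0,0,2,0,1,2])"
    by (rule std_mon) auto
  show ?thesis unfolding NI_def using S H L I lk std ks_mono[of "[0,0,2,0,1,2]"] by auto
qed


section \<open>Functionals for the base cases\<close>

lemma sum4: "(\<Sum>j<4::nat. g j) = g 0 + g 1 + g 2 + (g 3 :: 'a::comm_monoid_add)"
  by (simp add: eval_nat_numeral add_ac)

lemma sum2: "(\<Sum>j<2::nat. g j) = g 0 + (g 1 :: 'a::comm_monoid_add)"
  by (simp add: eval_nat_numeral add_ac)

lemma sum6: "(\<Sum>j<6::nat. g j) = g 0 + g 1 + g 2 + g 3 + g 4 + (g 5 :: 'a::comm_monoid_add)"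
  by (simp add: eval_nat_numeral add_ac)

lemma lk_add_single: "lk ((x::nat \<Rightarrow>\<^sub>0 nat) + Poly_Mapping.single j c) i = (if i = j then lk x i + c else lk x i)"
  by (simp add: lookup_add lookup_single when_def)

lemma less4: "(j::nat) < 4 \<longleftrightarrow> j = 0 \<or> j = 1 \<or> j = 2 \<or> j = 3" by auto
lemma less6: "(j::nat) < 6 \<longleftrightarrow> j = 0 \<or> j = 1 \<or> j = 2 \<or> j = 3 \<or> j = 4 \<or> j = 5" by auto
lemma less2: "(j::nat) < 2 \<longleftrightarrow> j = 0 \<or> j = 1" by auto

lemma case1_NS:
  assumes d: "d \<ge> 3"
  shows "NS 2 d (mon [3, d - 3, 0, 0]) (d - 1) (\<lambda>x::nat \<Rightarrow>\<^sub>0 nat. sp d (lk x 0) (lk x 1) :: 'k::idom) (mon [d - 1, 0])"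
proof -
  let ?C = "\<lambda>x::nat \<Rightarrow>\<^sub>0 nat. sp d (lk x 0) (lk x 1) :: 'k"
  have bal: "\<forall>x. (\<Sum>j<2. ?C (x + Poly_Mapping.single j 1)) = 0"
    by (simp add: sum2 lk_add_single sp_bal)
  have loc: "\<forall>x y. (\<forall>j<2. lk x j = lk y j) \<longrightarrow> ?C x = ?C y"
    by simp
  have pow: "\<forall>x. (\<exists>j<2. d \<le> lk x j) \<longrightarrow> ?C x = 0"
  proof (intro allI impI)
    fix x :: "nat \<Rightarrow>\<^sub>0 nat"
    assume "\<exists>j<2. d \<le> lk x j"
    then have "d \<le> lk x 0 + lk x 1" unfolding less2 by auto
    then show "?C x = 0" using d by (simp add: sp_def)
  qed
  have mu: "\<forall>x. (\<forall>j. lk (mon [3, d - 3, 0, 0]) j \<le> lk x j) \<longrightarrow> ?C x = 0"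
  proof (intro allI impI)
    fix x assume A: "\<forall>j. lk (mon [3, d - 3, 0, 0]) j \<le> lk x j"
    have "3 \<le> lk x 0" "d - 3 \<le> lk x 1" using A[rule_format, of 0] A[rule_format, of 1] by (simp_all add: lk_mono)
    then show "?C x = 0" using d by (simp add: sp_def)
  qed
  have nz: "?C (mon [d - 1, 0]) \<noteq> 0" by (simp add: lk_mono sp_def)
  have ks: "ks (mon [d - 1, 0]) \<subseteq> {..<2}" by (rule ks_mono') simp
  have md: "mdeg (mon [d - 1, 0]) = d - 1" by (simp add: mdeg_mono)
  show ?thesis unfolding NS_def using bal loc pow mu nz ks md by blast
qed

definition V4 :: "nat \<Rightarrow> nat \<Rightarrow> nat \<Rightarrow> nat \<Rightarrow> int" where
  "V4 a b c e = (if a \<le> 3 \<and> b \<le> 3 \<and> c \<le> 3 \<and> e \<le> 3 then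
     (int b - int a) * (int c - int a) * (int e - int a) * (int c - int b) * (int e - int b) * (int e - int c) else 0)"

lemma le3: "(a::nat) \<le> 3 \<longleftrightarrow> a = 0 \<or> a = 1 \<or> a = 2 \<or> a = 3" by auto

lemma V4_bal: "V4 (Suc a) b c e + V4 a (Suc b) c e + V4 a b (Suc c) e + V4 a b c (Suc e) = 0"
proof (cases "a \<le> 3 \<and> b \<le> 3 \<and> c \<le> 3 \<and> e \<le> 3")
  case True
  then show ?thesis unfolding le3 by (elim conjE disjE) (simp_all add: V4_def)
next
  case False
  then show ?thesis by (auto simp: V4_def)
qed

lemma V4_mu: "1 \<le> a \<Longrightarrow> 1 \<le> b \<Longrightarrow> 1 \<le> c \<Longrightarrow> 1 \<le> e \<Longrightarrow> V4 a b c e = 0"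
proof (cases "a \<le> 3 \<and> b \<le> 3 \<and> c \<le> 3 \<and> e \<le> 3")
  case True
  assume "1 \<le> a" "1 \<le> b" "1 \<le> c" "1 \<le> e"
  with True show ?thesis unfolding le3 by (elim conjE disjE) (simp_all add: V4_def)
next
  case False
  then show ?thesis by (auto simp: V4_def)
qed

lemma case2_NS:
  "NS 4 4 (mon [1,1,1,1]) 6 (\<lambda>x::nat \<Rightarrow>\<^sub>0 nat. of_int (V4 (lk x 0) (lk x 1) (lk x 2) (lk x 3)) :: 'k::{idom,ring_char_0}) (mon [0,1,2,3])"
proof -
  let ?C = "\<lambda>x::nat \<Rightarrow>\<^sub>0 nat. of_int (V4 (lk x 0) (lk x 1) (lk x 2) (lk x 3)) :: 'k"
  have bal: "\<forall>x. (\<Sum>j<4. ?C (x + Poly_Mapping.single j 1)) = 0"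
  proof
    fix x :: "nat \<Rightarrow>\<^sub>0 nat"
    have "(\<Sum>j<4. ?C (x + Poly_Mapping.single j 1)) = of_int (V4 (Suc (lk x 0)) (lk x 1) (lk x 2) (lk x 3)
       + V4 (lk x 0) (Suc (lk x 1)) (lk x 2) (lk x 3) + V4 (lk x 0) (lk x 1) (Suc (lk x 2)) (lk x 3)
       + V4 (lk x 0) (lk x 1) (lk x 2) (Suc (lk x 3)))"
      by (simp add: sum4 lk_add_single)
    then show "(\<Sum>j<4. ?C (x + Poly_Mapping.single j 1)) = 0" by (simp only: V4_bal of_int_0)
  qed
  have loc: "\<forall>x y. (\<forall>j<4. lk x j = lk y j) \<longrightarrow> ?C x = ?C y"
    by (simp add: less4)
  have pow: "\<forall>x. (\<exists>j<4. 4 \<le> lk x j) \<longrightarrow> ?C x = 0"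
    by (auto simp: less4 V4_def)
  have mu: "\<forall>x. (\<forall>j. lk (mon [1,1,1,1]) j \<le> lk x j) \<longrightarrow> ?C x = 0"
  proof (intro allI impI)
    fix x assume A: "\<forall>j. lk (mon [1,1,1,1]) j \<le> lk x j"
    have "1 \<le> lk x 0" "1 \<le> lk x 1" "1 \<le> lk x 2" "1 \<le> lk x 3"
      using A[rule_format, of 0] A[rule_format, of 1] A[rule_format, of 2] A[rule_format, of 3]
      by (simp_all add: lk_mono)
    then show "?C x = 0" by (simp add: V4_mu)
  qed
  have nz: "?C (mon [0,1,2,3]) \<noteq> 0" by (simp add: lk_mono V4_def)
  have ks: "ks (mon [0,1,2,3]) \<subseteq> {..<4}" by (rule ks_mono') simp
  have md: "mdeg (mon [0,1,2,3]) = 6" by (simp add: mdeg_mono)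
  show ?thesis unfolding NS_def using bal loc pow mu nz ks md by blast
qed

definition V3 :: "nat \<Rightarrow> nat \<Rightarrow> nat \<Rightarrow> int" where
  "V3 a b c = (if a \<le> 2 \<and> b \<le> 2 \<and> c \<le> 2 then (int b - int a) * (int c - int a) * (int c - int b) else 0)"

lemma le2: "(a::nat) \<le> 2 \<longleftrightarrow> a = 0 \<or> a = 1 \<or> a = 2" by auto

lemma V3_bal: "V3 (Suc a) b c + V3 a (Suc b) c + V3 a b (Suc c) = 0"
proof (cases "a \<le> 2 \<and> b \<le> 2 \<and> c \<le> 2")
  case True
  then show ?thesis unfolding le2 by (elim conjE disjE) (simp_all add: V3_def)
next
  case False
  then show ?thesis by (auto simp: V3_def)
qed

lemma V3_mu: "1 \<le> a \<Longrightarrow> 1 \<le> b \<Longrightarrow> 1 \<le> c \<Longrightarrow> V3 a b c = 0"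
proof (cases "a \<le> 2 \<and> b \<le> 2 \<and> c \<le> 2")
  case True
  assume "1 \<le> a" "1 \<le> b" "1 \<le> c"
  with True show ?thesis unfolding le2 by (elim conjE disjE) (simp_all add: V3_def)
next
  case False
  then show ?thesis by (auto simp: V3_def)
qed

lemma case3_NS:
  "NS 6 3 (mon [1,1,1,0,0,0]) 6 (\<lambda>x::nat \<Rightarrow>\<^sub>0 nat. of_int (V3 (lk x 0) (lk x 1) (lk x 2) * V3 (lk x 3) (lk x 4) (lk x 5)) :: 'k::{idom,ring_char_0}) (mon [0,1,2,0,1,2])"
proof -
  let ?C = "\<lambda>x::nat \<Rightarrow>\<^sub>0 nat. of_int (V3 (lk x 0) (lk x 1) (lk x 2) * V3 (lk x 3) (lk x 4) (lk x 5)) :: 'k"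
  have bal: "\<forall>x. (\<Sum>j<6. ?C (x + Poly_Mapping.single j 1)) = 0"
  proof
    fix x :: "nat \<Rightarrow>\<^sub>0 nat"
    let ?u = "V3 (lk x 0) (lk x 1) (lk x 2)" and ?w = "V3 (lk x 3) (lk x 4) (lk x 5)"
    have "(\<Sum>j<6. ?C (x + Poly_Mapping.single j 1)) = of_int (
        (V3 (Suc (lk x 0)) (lk x 1) (lk x 2) + V3 (lk x 0) (Suc (lk x 1)) (lk x 2) + V3 (lk x 0) (lk x 1) (Suc (lk x 2))) * ?w
      + ?u * (V3 (Suc (lk x 3)) (lk x 4) (lk x 5) + V3 (lk x 3) (Suc (lk x 4)) (lk x 5) + V3 (lk x 3) (lk x 4) (Suc (lk x 5))))"
      by (simp add: sum6 lk_add_single algebra_simps)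
    then show "(\<Sum>j<6. ?C (x + Poly_Mapping.single j 1)) = 0" by (simp only: V3_bal mult_zero_left mult_zero_right add_0 of_int_0)
  qed
  have loc: "\<forall>x y. (\<forall>j<6. lk x j = lk y j) \<longrightarrow> ?C x = ?C y"
    by (simp add: less6)
  have pow: "\<forall>x. (\<exists>j<6. 3 \<le> lk x j) \<longrightarrow> ?C x = 0"
    by (auto simp: less6 V3_def)
  have mu: "\<forall>x. (\<forall>j. lk (mon [1,1,1,0,0,0]) j \<le> lk x j) \<longrightarrow> ?C x = 0"
  proof (intro allI impI)
    fix x assume A: "\<forall>j. lk (mon [1,1,1,0,0,0]) j \<le> lk x j"
    have "1 \<le> lk x 0" "1 \<le> lk x 1" "1 \<le> lk x 2"
      using A[rule_format, of 0] A[rule_format, of 1] A[rule_format, of 2]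
      by (simp_all add: lk_mono)
    then show "?C x = 0" by (simp add: V3_mu)
  qed
  have nz: "?C (mon [0,1,2,0,1,2]) \<noteq> 0" by (simp add: lk_mono V3_def)
  have ks: "ks (mon [0,1,2,0,1,2]) \<subseteq> {..<6}" by (rule ks_mono') simp
  have md: "mdeg (mon [0,1,2,0,1,2]) = 6" by (simp add: mdeg_mono)
  show ?thesis unfolding NS_def using bal loc pow mu nz ks md by blast
qed


definition kill :: "nat set \<Rightarrow> ('k::comm_ring_1) mpoly \<Rightarrow> 'k mpoly" where
  "kill Z p = Poly_Mapping.mapp (\<lambda>a c. if ks a \<inter> Z = {} then c else 0) p"

lemma lk_kill: "lk (kill Z p) a = (if ks a \<inter> Z = {} then lk p a else 0)"
  by (simp add: kill_def lookup_mapp when_def in_keys_iff)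

lemma kill_add: "kill Z (p + q) = kill Z p + kill Z q"
  by (rule poly_mapping_eqI) (simp add: lk_kill lookup_add)

lemma kill_uminus: "kill Z (- p) = - kill Z p"
  by (rule poly_mapping_eqI) (simp add: lk_kill)

lemma kill_diff: "kill Z (p - q) = kill Z p - kill Z q"
  by (rule poly_mapping_eqI) (simp add: lk_kill lookup_minus)

lemma kill_sum: "kill Z (sum f A) = (\<Sum>i\<in>A. kill Z (f i))"
  by (rule poly_mapping_eqI) (simp add: lk_kill lookup_sum)

lemma kill_single: "kill Z (Poly_Mapping.single a c) = (if ks a \<inter> Z = {} then Poly_Mapping.single a c else 0)"
  by (rule poly_mapping_eqI) (simp add: lk_kill lookup_single when_def)

lemma kill_mult: "kill Z (p * q) = kill Z p * kill Z q"
proof -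
  have pq: "p * q = (\<Sum>x\<in>ks p. \<Sum>y\<in>ks q. Poly_Mapping.single (x + y) (lk p x * lk q y))"
    by (subst poly_expansion[of p], subst poly_expansion[of q])
       (simp add: sum_distrib_left sum_distrib_right mult_single sum.swap[of _ "ks q"])
  have kp: "kill Z p = (\<Sum>x\<in>ks p. kill Z (Poly_Mapping.single x (lk p x)))"
    by (subst poly_expansion[of p]) (simp add: kill_sum)
  have kq: "kill Z q = (\<Sum>y\<in>ks q. kill Z (Poly_Mapping.single y (lk q y)))"
    by (subst poly_expansion[of q]) (simp add: kill_sum)
  have "kill Z p * kill Z q = (\<Sum>x\<in>ks p. \<Sum>y\<in>ks q. kill Z (Poly_Mapping.single x (lk p x)) * kill Z (Poly_Mapping.single y (lk q y)))"
    by (simp add: kp kq sum_distrib_left sum_distrib_right) (rule sum.swap)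
  also have "\<dots> = (\<Sum>x\<in>ks p. \<Sum>y\<in>ks q. kill Z (Poly_Mapping.single (x + y) (lk p x * lk q y)))"
    by (intro sum.cong refl) (auto simp: kill_single mult_single keys_add_nat)
  also have "\<dots> = kill Z (p * q)"
    by (simp add: pq kill_sum)
  finally show ?thesis by simp
qed

lemma kill_one: "kill Z 1 = 1"
  by (metis kill_single keys_zero inf_bot_left single_one)

lemma kill_pow: "kill Z (p ^ k) = kill Z p ^ k"
  by (induction k) (simp_all add: kill_one kill_mult)

lemma kill_Var: "kill Z (Var j) = (if j \<in> Z then 0 else Var j)"
  by (simp add: Var_def kill_single)


lemma binom_diff:
  fixes x y :: "'a::comm_ring_1"
  shows "(x + y) ^ Suc M * (x - y) = x ^ Suc (Suc M) - y ^ Suc (Suc M)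
     + (\<Sum>k<Suc M. (of_nat (Suc M choose k) - of_nat (Suc M choose Suc k)) * x ^ Suc k * y ^ (Suc M - k))"
proof -
  define N where "N = Suc M"
  have bin: "(x + y) ^ N = (\<Sum>k\<le>N. of_nat (N choose k) * x ^ k * y ^ (N - k))"
    by (rule binomial_ring)
  have S1: "(x + y) ^ N * x = (\<Sum>k<N. of_nat (N choose k) * x ^ Suc k * y ^ (N - k)) + x ^ Suc N"
  proof -
    have "(x + y) ^ N * x = (\<Sum>k\<le>N. of_nat (N choose k) * x ^ Suc k * y ^ (N - k))"
      by (simp add: bin sum_distrib_left sum_distrib_right mult_ac)
    also have "\<dots> = (\<Sum>k<N. of_nat (N choose k) * x ^ Suc k * y ^ (N - k)) + x ^ Suc N"
      by (simp add: lessThan_Suc_atMost[symmetric])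
    finally show ?thesis .
  qed
  have S2: "(x + y) ^ N * y = y ^ Suc N + (\<Sum>k<N. of_nat (N choose Suc k) * x ^ Suc k * y ^ (N - k))"
  proof -
    have "(x + y) ^ N * y = (\<Sum>k\<le>N. of_nat (N choose k) * x ^ k * y ^ Suc (N - k))"
      by (simp add: bin sum_distrib_left sum_distrib_right mult_ac)
    also have "\<dots> = y ^ Suc N + (\<Sum>k\<le>M. of_nat (N choose Suc k) * x ^ Suc k * y ^ Suc (N - Suc k))"
      unfolding N_def by (subst sum.atMost_Suc_shift) simp
    also have "(\<Sum>k\<le>M. of_nat (N choose Suc k) * x ^ Suc k * y ^ Suc (N - Suc k))
        = (\<Sum>k<N. of_nat (N choose Suc k) * x ^ Suc k * y ^ (N - k))"
      unfolding N_def lessThan_Suc_atMost[symmetric]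
      by (intro sum.cong refl) (simp add: Suc_diff_le del: binomial_Suc_Suc)
    finally show ?thesis .
  qed
  have "(x + y) ^ N * (x - y) = (x + y) ^ N * x - (x + y) ^ N * y"
    by (simp add: right_diff_distrib)
  also have "\<dots> = x ^ Suc N - y ^ Suc N + ((\<Sum>k<N. of_nat (N choose k) * x ^ Suc k * y ^ (N - k)) - (\<Sum>k<N. of_nat (N choose Suc k) * x ^ Suc k * y ^ (N - k)))"
    unfolding S1 S2 by (simp add: algebra_simps)
  also have "(\<Sum>k<N. of_nat (N choose k) * x ^ Suc k * y ^ (N - k)) - (\<Sum>k<N. of_nat (N choose Suc k) * x ^ Suc k * y ^ (N - k))
      = (\<Sum>k<N. (of_nat (N choose k) - of_nat (N choose Suc k)) * x ^ Suc k * y ^ (N - k))"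
    by (simp add: sum_subtractf[symmetric] left_diff_distrib)
  finally show ?thesis unfolding N_def .
qed

section \<open>The case d at least 5: base witness\<close>

definition f1 :: "nat \<Rightarrow> ('k::comm_ring_1) mpoly" where
  "f1 d = (\<Sum>i<2 * d - 3. (- (Var 2 + Var 3)) ^ (2 * d - 3 - Suc i) * (Var 0 + Var 1) ^ i) * (Var 2 - Var 3)"

lemma pow_split: "m \<le> k \<Longrightarrow> (x::'a::comm_ring_1) ^ k = x ^ (k - m) * x ^ m"
  by (simp add: power_add[symmetric])

lemma case1_A:
  assumes d: "d \<ge> 5"
  shows "((Var 0 + Var 1) ^ (2 * d - 3) :: ('k::comm_ring_1) mpoly) \<in> ideal_gen 4 (Gset 4 d (mon [3, d - 3, 0, 0]))"
proof -
  let ?N = "2 * d - 3"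
  let ?I = "ideal_gen 4 (Gset 4 d (mon [3, d - 3, 0, 0])) :: 'k mpoly set"
  have "(of_nat (?N choose k) * Var 0 ^ k * Var 1 ^ (?N - k) :: 'k mpoly) \<in> ?I" if k: "k \<in> {..?N}" for k
  proof -
    let ?c = "of_nat (?N choose k) :: 'k mpoly"
    have cS: "in_S 4 ?c" by simp
    consider "d \<le> k" | "d \<le> ?N - k" | "\<not> d \<le> k" "\<not> d \<le> ?N - k" by blast
    then show ?thesis
    proof cases
      case 1
      have "?c * Var 0 ^ k * Var 1 ^ (?N - k) = (?c * Var 0 ^ (k - d) * Var 1 ^ (?N - k)) * Var 0 ^ d"
        using pow_split[OF 1, of "Var 0 :: 'k mpoly"] by (simp add: mult_ac)
      also have "\<dots> \<in> ?I" by (rule memP) (simp_all add: in_S_simps)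
      finally show ?thesis .
    next
      case 2
      have "?c * Var 0 ^ k * Var 1 ^ (?N - k) = (?c * Var 0 ^ k * Var 1 ^ (?N - k - d)) * Var 1 ^ d"
        using pow_split[OF 2, of "Var 1 :: 'k mpoly"] by (simp add: mult_ac)
      also have "\<dots> \<in> ?I" by (rule memP) (simp_all add: in_S_simps)
      finally show ?thesis .
    next
      case 3
      then have k3: "3 \<le> k" "d - 3 \<le> ?N - k" using d by auto
      have "?c * Var 0 ^ k * Var 1 ^ (?N - k) = (?c * Var 0 ^ (k - 3) * Var 1 ^ (?N - k - (d - 3))) * (Var 0 ^ 3 * Var 1 ^ (d - 3))"
        using pow_split[OF k3(1), of "Var 0 :: 'k mpoly"] pow_split[OF k3(2), of "Var 1 :: 'k mpoly"]
        by (simp add: mult_ac)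
      also have "Var 0 ^ 3 * Var 1 ^ (d - 3) = (Xm [3, d - 3, 0, 0] :: 'k mpoly)"
        by (simp add: Xm4)
      also have "(?c * Var 0 ^ (k - 3) * Var 1 ^ (?N - k - (d - 3))) * Xm [3, d - 3, 0, 0] \<in> ?I"
        by (rule memM) (simp_all add: in_S_simps)
      finally show ?thesis .
    qed
  qed
  then show ?thesis
    by (subst binomial_ring) (rule ideal_sum)
qed

lemma case1_B:
  assumes d: "d \<ge> 5"
  shows "((Var 2 + Var 3) ^ (2 * d - 3) * (Var 2 - Var 3) :: ('k::comm_ring_1) mpoly) \<in> ideal_gen 4 (Gset 4 d (mon [3, d - 3, 0, 0]))"
proof -
  define M where "M = 2 * d - 4"
  have NM: "2 * d - 3 = Suc M" using d by (simp add: M_def)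
  let ?I = "ideal_gen 4 (Gset 4 d (mon [3, d - 3, 0, 0])) :: 'k mpoly set"
  have eq: "((Var 2 + Var 3) ^ (2 * d - 3) * (Var 2 - Var 3) :: 'k mpoly)
     = Var 2 ^ Suc (Suc M) - Var 3 ^ Suc (Suc M)
     + (\<Sum>k<Suc M. (of_nat (Suc M choose k) - of_nat (Suc M choose Suc k)) * Var 2 ^ Suc k * Var 3 ^ (Suc M - k))"
    unfolding NM by (rule binom_diff)
  have dM: "d \<le> Suc (Suc M)" using d by (simp add: M_def)
  have 1: "(Var 2 ^ Suc (Suc M) :: 'k mpoly) \<in> ?I"
  proof -
    have "(Var 2 ^ Suc (Suc M) :: 'k mpoly) = Var 2 ^ (Suc (Suc M) - d) * Var 2 ^ d"
      by (rule pow_split[OF dM])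
    also have "\<dots> \<in> ?I" by (rule memP) (simp_all add: in_S_simps)
    finally show ?thesis .
  qed
  have 2: "(Var 3 ^ Suc (Suc M) :: 'k mpoly) \<in> ?I"
  proof -
    have "(Var 3 ^ Suc (Suc M) :: 'k mpoly) = Var 3 ^ (Suc (Suc M) - d) * Var 3 ^ d"
      by (rule pow_split[OF dM])
    also have "\<dots> \<in> ?I" by (rule memP) (simp_all add: in_S_simps)
    finally show ?thesis .
  qed
  have 3: "((of_nat (Suc M choose k) - of_nat (Suc M choose Suc k)) * Var 2 ^ Suc k * Var 3 ^ (Suc M - k) :: 'k mpoly) \<in> ?I"
    if k: "k \<in> {..<Suc M}" for k
  proof -
    let ?c = "(of_nat (Suc M choose k) - of_nat (Suc M choose Suc k)) :: 'k mpoly"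
    consider "d \<le> Suc k" | "d \<le> Suc M - k" | "\<not> d \<le> Suc k" "\<not> d \<le> Suc M - k" by blast
    then show ?thesis
    proof cases
      case 1
      have "?c * Var 2 ^ Suc k * Var 3 ^ (Suc M - k) = (?c * Var 2 ^ (Suc k - d) * Var 3 ^ (Suc M - k)) * Var 2 ^ d"
        using pow_split[OF 1, of "Var 2 :: 'k mpoly"] by (simp add: mult_ac)
      also have "\<dots> \<in> ?I" by (rule memP) (simp_all add: in_S_simps in_S_of_nat)
      finally show ?thesis .
    next
      case 2
      have "?c * Var 2 ^ Suc k * Var 3 ^ (Suc M - k) = (?c * Var 2 ^ Suc k * Var 3 ^ (Suc M - k - d)) * Var 3 ^ d"
        using pow_split[OF 2, of "Var 3 :: 'k mpoly"] by (simp add: mult_ac)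
      also have "\<dots> \<in> ?I" by (rule memP) (simp_all add: in_S_simps in_S_of_nat)
      finally show ?thesis .
    next
      case 3
      then have kd: "k = d - 2" using d by (auto simp: M_def)
      have "Suc M choose k = Suc M choose (Suc M - k)"
        using k by (intro binomial_symmetric) simp
      also have "Suc M - k = Suc k" using kd d by (simp add: M_def)
      finally have "?c = 0" by simp
      then show ?thesis by (simp add: ideal_0)
    qed
  qed
  show ?thesis unfolding eq
    by (intro ideal_add ideal_diff 1 2 ideal_sum 3)
qed

lemma case1_lookup:
  assumes d: "d \<ge> 5"
  shows "lk (f1 d :: ('k::idom) mpoly) (mon [0, d - 1, 0, d - 2]) \<noteq> 0"
proof -
  let ?N = "2 * d - 3"
  let ?t = "mon [0, d - 1, 0, d - 2]"
  let ?e = "\<lambda>i. Poly_Mapping.single 3 (?N - Suc i) + Poly_Mapping.single 1 i + Poly_Mapping.single 3 1 :: nat \<Rightarrow>\<^sub>0 nat"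
  have t0: "lk ?t 0 = 0" "lk ?t 2 = 0" by (simp_all add: lk_mono)
  then have tZ: "ks ?t \<inter> {0, 2} = {}" by (auto simp: in_keys_iff)
  have "kill {0, 2} (f1 d :: 'k mpoly) = (\<Sum>i<?N. (- Var 3) ^ (?N - Suc i) * Var 1 ^ i) * (- Var 3)"
    by (simp add: f1_def kill_mult kill_sum kill_pow kill_add kill_uminus kill_diff kill_Var)
  also have "\<dots> = (\<Sum>i<?N. Poly_Mapping.single (?e i) ((-1) ^ (?N - Suc i) * (-1)))"
  proof -
    have m: "(- Var 3 :: 'k mpoly) = Poly_Mapping.single (Poly_Mapping.single 3 1) (-1)"
      by (simp add: Var_def single_uminus)
    show ?thesis
      by (subst (2) m) (simp add: sum_distrib_right neg_Var_pow Var_pow mult_single)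
  qed
  finally have K: "kill {0, 2} (f1 d :: 'k mpoly) = (\<Sum>i<?N. Poly_Mapping.single (?e i) ((-1) ^ (?N - Suc i) * (-1)))" .
  have E: "?e i = ?t \<longleftrightarrow> i = d - 1" if "i < ?N" for i
  proof
    assume "?e i = ?t"
    then have "lk (?e i) 1 = lk ?t 1" by simp
    then show "i = d - 1" by (simp add: lookup_add lookup_single lk_mono)
  next
    assume i: "i = d - 1"
    show "?e i = ?t"
    proof (rule poly_mapping_eqI)
      fix j
      show "lk (?e i) j = lk ?t j"
      proof (cases "j < 4")
        case True
        then show ?thesis unfolding less4 using i d
          by (auto simp: lookup_add lookup_single lk_mono)
      next
        case False
        then show ?thesis by (auto simp: lookup_add lookup_single lk_mono)
      qed
    qed
  qed
  have "lk (f1 d :: 'k mpoly) ?t = lk (kill {0, 2} (f1 d :: 'k mpoly)) ?t"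
    using tZ by (simp add: lk_kill)
  also have "\<dots> = (\<Sum>i<?N. if i = d - 1 then (-1) ^ (?N - Suc i) * (-1) else 0)"
    unfolding K lookup_sum
  proof (intro sum.cong refl)
    fix i assume "i \<in> {..<?N}"
    then have i: "i < ?N" by simp
    show "lk (Poly_Mapping.single (?e i) ((-1) ^ (?N - Suc i) * (-1))) ?t
        = (if i = d - 1 then (-1) ^ (?N - Suc i) * (-1) else (0::'k))"
      by (simp only: lookup_single when_def E[OF i])
  qed
  also have "\<dots> = (-1) ^ (?N - Suc (d - 1)) * (-1)"
    using d by (simp add: sum.delta)
  finally show ?thesis by simp
qed

lemma case1_NI:
  assumes d: "d \<ge> 5"
  shows "NI 4 d (mon [3, d - 3, 0, 0]) (2 * d - 3) (f1 d :: ('k::idom) mpoly) (mon [0, d - 1, 0, d - 2])"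
proof -
  let ?N = "2 * d - 3"
  let ?a = "Var 0 + Var 1 :: 'k mpoly" and ?b = "Var 2 + Var 3 :: 'k mpoly" and ?w = "Var 2 - Var 3 :: 'k mpoly"
  let ?I = "ideal_gen 4 (Gset 4 d (mon [3, d - 3, 0, 0])) :: 'k mpoly set"
  have S: "in_S 4 (f1 d :: 'k mpoly)"
    unfolding f1_def by (simp add: in_S_simps in_S_sum)
  have H: "homog ?N (f1 d :: 'k mpoly)"
    unfolding f1_def
  proof (rule homog_mult'[of "?N - 1" _ 1])
    show "homog (?N - 1) (\<Sum>i<?N. (- ?b) ^ (?N - Suc i) * ?a ^ i)"
    proof (rule homog_sum)
      fix i assume i: "i \<in> {..<?N}"
      show "homog (?N - 1) ((- ?b) ^ (?N - Suc i) * ?a ^ i)"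
        by (rule homog_mult'[of "?N - Suc i" _ i], rule homog_pow1, rule homog_uminus, rule homog_add,
            rule homog_Var, rule homog_Var, rule homog_pow1, rule homog_add, rule homog_Var, rule homog_Var)
           (use i in simp)
    qed
    show "homog 1 ?w" by (intro homog_diff homog_Var)
    show "?N = ?N - 1 + 1" using d by simp
  qed
  have L: "lin_form 4 * (f1 d :: 'k mpoly) = ?w * ?a ^ ?N - (-1) ^ ?N * (?b ^ ?N * ?w)"
  proof -
    have "lin_form 4 * (f1 d :: 'k mpoly) = ((?a - - ?b) * (\<Sum>i<?N. (- ?b) ^ (?N - Suc i) * ?a ^ i)) * ?w"
      unfolding f1_def lin4 by (simp add: mult_ac add_ac)
    also have "\<dots> = (?a ^ ?N - (- ?b) ^ ?N) * ?w"
      by (simp only: power_diff_sumr2[symmetric])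
    also have "\<dots> = ?w * ?a ^ ?N - (-1) ^ ?N * (?b ^ ?N * ?w)"
      by (simp only: power_minus[of ?b]) (simp add: algebra_simps)
    finally show ?thesis .
  qed
  have I: "lin_form 4 * (f1 d :: 'k mpoly) \<in> ?I"
    unfolding L
    by (intro ideal_diff ideal_mult case1_A case1_B d) (simp_all add: in_S_simps)
  have std: "std 4 d (mon [3, d - 3, 0, 0]) (mon [0, d - 1, 0, d - 2])"
    by (rule std_mon) (use d in auto)
  have ks: "ks (mon [0, d - 1, 0, d - 2]) \<subseteq> {..<4}" by (rule ks_mono') simp
  show ?thesis unfolding NI_def using S H I case1_lookup[OF d] std ks by blast
qed

lemma fails_from:
  fixes C :: "(nat \<Rightarrow>\<^sub>0 nat) \<Rightarrow> 'k::idom" and f :: "'k mpoly"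
  assumes "NI n d e i f a" "NS n d e (Suc i) C b"
  shows "fails_WLP_in_degree n (Gset n d e :: 'k mpoly set) i"
  unfolding fails_WLP_in_degree_def using NI_final[OF assms(1)] NS_final[OF assms(2)] by blast

lemma Gset_eq1: "insert (Var 0 ^ 3 * Var 1 ^ (d - 3)) (pure_powers n d) = (Gset n d (mon [3, d - 3, 0, 0]) :: ('k::comm_ring_1) mpoly set)"
proof -
  have "(Poly_Mapping.single (mon [3, d - 3, 0, 0]) 1 :: 'k mpoly) = Var 0 ^ 3 * Var 1 ^ (d - 3)"
    using Xm4[of 3 "d - 3" 0 0] by (simp add: Xm_def)
  then show ?thesis by (simp add: Gset_def)
qed

lemma Gset_eq2: "insert (Var 0 * Var 1 * Var 2 * Var 3) (pure_powers n d) = (Gset n d (mon [1,1,1,1]) :: ('k::comm_ring_1) mpoly set)"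
proof -
  have "(Poly_Mapping.single (mon [1,1,1,1]) 1 :: 'k mpoly) = Var 0 * Var 1 * Var 2 * Var 3"
    using Xm4[of 1 1 1 1] by (simp add: Xm_def)
  then show ?thesis by (simp add: Gset_def)
qed

lemma Gset_eq3: "insert (Var 0 * Var 1 * Var 2) (pure_powers n d) = (Gset n d (mon [1,1,1,0,0,0]) :: ('k::comm_ring_1) mpoly set)"
proof -
  have "(Poly_Mapping.single (mon [1,1,1,0,0,0]) 1 :: 'k mpoly) = Var 0 * Var 1 * Var 2"
    using Xm6[of 1 1 1 0 0 0] by (simp add: Xm_def)
  then show ?thesis by (simp add: Gset_def)
qed

lemma part1:
  assumes "n = 2 * m" "d \<ge> 5" "n \<ge> 4"
  shows "fails_WLP_in_degree n (Gset n d (mon [3, d - 3, 0, 0]) :: ('k::{idom,ring_char_0}) mpoly set) (m * (d - 1) - 1)"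
proof -
  have m2: "2 \<le> m" using assms by simp
  obtain k where k: "m = k + 2" using le_Suc_ex[OF m2] by (auto simp: add.commute)
  obtain c where c: "d = c + 5" using le_Suc_ex[OF assms(2)] by (auto simp: add.commute)
  have e: "ks (mon [3, d - 3, 0, 0]) \<subseteq> {..<4}" by (rule ks_mono') simp
  obtain f :: "'k mpoly" and a where NI: "NI (4 + 2 * k) d (mon [3, d - 3, 0, 0]) (2 * d - 3 + k * (d - 1)) f a"
    using NI_iter[OF case1_NI[OF assms(2)] e, of k] assms(2) by auto
  obtain C :: "(nat \<Rightarrow>\<^sub>0 nat) \<Rightarrow> 'k" and b where NS: "NS (2 + 2 * Suc k) d (mon [3, d - 3, 0, 0]) (d - 1 + Suc k * (d - 1)) C b"
    using NS_iter[OF case1_NS[of d] , of "Suc k"] assms(2) by auto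
  have n: "4 + 2 * k = n" "2 + 2 * Suc k = n" using assms(1) k by simp_all
  have i: "2 * d - 3 + k * (d - 1) = m * (d - 1) - 1" "d - 1 + Suc k * (d - 1) = Suc (m * (d - 1) - 1)"
    unfolding k c by (simp_all add: algebra_simps)
  show ?thesis using fails_from[of n d _ "m * (d - 1) - 1" f a C b] NI NS unfolding n i by blast
qed

lemma part2:
  assumes "n = 2 * m" "n \<ge> 4"
  shows "fails_WLP_in_degree n (Gset n 4 (mon [1,1,1,1]) :: ('k::{idom,ring_char_0}) mpoly set) (m * (4 - 1) - 1)"
proof -
  have m2: "2 \<le> m" using assms by simp
  obtain k where k: "m = k + 2" using le_Suc_ex[OF m2] by (auto simp: add.commute)
  have e: "ks (mon [1,1,1,1]) \<subseteq> {..<4}" by (rule ks_mono') simp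
  obtain f :: "'k mpoly" and a where NI: "NI (4 + 2 * k) 4 (mon [1,1,1,1]) (5 + k * (4 - 1)) f a"
    using NI_iter[OF case2_NI e, of k] by auto
  obtain C :: "(nat \<Rightarrow>\<^sub>0 nat) \<Rightarrow> 'k" and b where NS: "NS (4 + 2 * k) 4 (mon [1,1,1,1]) (6 + k * (4 - 1)) C b"
    using NS_iter[OF case2_NS, of k] by auto
  have n: "4 + 2 * k = n" using assms(1) k by simp
  have i: "5 + k * (4 - 1) = m * (4 - 1) - 1" "6 + k * (4 - 1) = Suc (m * (4 - 1) - 1)"
    unfolding k by simp_all
  show ?thesis using fails_from[of n 4 _ "m * (4 - 1) - 1" f a C b] NI NS unfolding n i by blast
qed

lemma part3:
  assumes "n = 2 * m" "n \<ge> 6"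
  shows "fails_WLP_in_degree n (Gset n 3 (mon [1,1,1,0,0,0]) :: ('k::{idom,ring_char_0}) mpoly set) (m * (3 - 1) - 1)"
proof -
  have m3: "3 \<le> m" using assms by simp
  obtain k where k: "m = k + 3" using le_Suc_ex[OF m3] by (auto simp: add.commute)
  have e: "ks (mon [1,1,1,0,0,0]) \<subseteq> {..<6}" by (rule ks_mono') simp
  obtain f :: "'k mpoly" and a where NI: "NI (6 + 2 * k) 3 (mon [1,1,1,0,0,0]) (5 + k * (3 - 1)) f a"
    using NI_iter[OF case3_NI e, of k] by auto
  obtain C :: "(nat \<Rightarrow>\<^sub>0 nat) \<Rightarrow> 'k" and b where NS: "NS (6 + 2 * k) 3 (mon [1,1,1,0,0,0]) (6 + k * (3 - 1)) C b"
    using NS_iter[OF case3_NS, of k] by auto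
  have n: "6 + 2 * k = n" using assms(1) k by simp
  have i: "5 + k * (3 - 1) = m * (3 - 1) - 1" "6 + k * (3 - 1) = Suc (m * (3 - 1) - 1)"
    unfolding k by simp_all
  show ?thesis using fails_from[of n 3 _ "m * (3 - 1) - 1" f a C b] NI NS unfolding n i by blast
qed

theorem proposition5p6:
  fixes m n d :: nat
  assumes "n = 2 * m"
  shows "(d \<ge> 5 \<and> n \<ge> 4 \<longrightarrow>
           fails_WLP_in_degree n
             (insert (Var 0 ^ 3 * Var 1 ^ (d - 3)) (pure_powers n d) :: ('k::field_char_0) mpoly set)
             (m * (d - 1) - 1))
       \<and> (d = 4 \<and> n \<ge> 4 \<longrightarrow>
           fails_WLP_in_degree n
             (insert (Var 0 * Var 1 * Var 2 * Var 3) (pure_powers n d) :: 'k mpoly set)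
             (m * (d - 1) - 1))
       \<and> (d = 3 \<and> n \<ge> 6 \<longrightarrow>
           fails_WLP_in_degree n
             (insert (Var 0 * Var 1 * Var 2) (pure_powers n d) :: 'k mpoly set)
             (m * (d - 1) - 1))"
  using part1[OF assms] part2[OF assms] part3[OF assms]
  unfolding Gset_eq1 Gset_eq2 Gset_eq3 by blast

end
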